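(* Let $R\subseteq S$, $\sigma$ be as in the context, $n=n_1+\cdots+n_\ell$. Let $\mathbf{a}=(a_1,\ldots,a_\ell)\in(S^* )^\ell$ and $\beta_{i,j}\in S$ ($1\le i\le\ell$, $1\le j\le n_i$) satisfy: (i) $a_i-a_j^\beta\in S^*$ for all $\beta\in S^*$ and $1\le i<j\le\ell$; (ii) for each $i$, $\beta_{i,1},\ldots,\beta_{i,n_i}$ are $R$-linearly independent. Let $b_{i,j}=\sigma(\beta_{i,j})a_i\beta_{i,j}^{-1}$. Fix $1\le k\le n-1$ and $t=\lfloor (n-k)/2\rfloor$. Let $\mathbf{c}\in\mathcal{C}_k(\mathbf{a},\boldsymbol\beta)$, let $\mathbf{e}\in S^n$ with ${\rm wt}_{SR}(\mathbf{e})\le t$, and $\mathbf{r}=\mathbf{c}+\mathbf{e}$. Write $c_{i,j},e_{i,j},r_{i,j}$ for the coordinates indexed by $(i,j)$. Let $F,G,H\in S[x;\sigma]$ be the unique skew polynomials of degree less than $n$ with $F(b_{i,j})=c_{i,j}\beta_{i,j}^{-1}$, $G(b_{i,j})=e_{i,j}\beta_{i,j}^{-1}$, $H(b_{i,j})=r_{i,j}\beta_{i,j}^{-1}$ for all $i,j$. Then there exists a non-zero monic $L\in S[x;\sigma]$ with $\deg(L)\le t$ such that $(LH)(b_{i,j})=(LF)(b_{i,j})$ for all $i,j$. In particular, there exist non-zero $L,Q\in S[x;\sigma]$ with $L$ monic, $\deg(L)\le t$, $\deg(Q)\le t+k-1$, and $(LH)(b_{i,j})=Q(b_{i,j})$ for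 all $1\le j\le n_i$, $1\le i\le\ell$.
   Context: $R$ is a finite commutative chain ring with maximal ideal $\mathfrak{m}$, $q=|R/\mathfrak{m}|$; $S=R[x]/(h)$ with $h$ monic of degree $m$ irreducible modulo $\mathfrak{m}$, local with maximal ideal $\mathfrak{M}=\mathfrak{m}S$ and unit group $S^*=S\setminus\mathfrak{M}$. $\sigma$ is a ring automorphism of $S$ generating the Galois group of $R\subseteq S$, with fixed ring $R$, reducing modulo $\mathfrak{M}$ to $y\mapsto y^q$. $S[x;\sigma]$ is the skew polynomial ring with $xa=\sigma(a)x$. Remainder evaluation: for $P\in S[x;\sigma]$ and $b\in S$, $P(b)$ is the unique $c\in S$ with $P=Q'(x-b)+c$ for some $Q'\in S[x;\sigma]$. For $a\in S$, $\beta\in S^*$: $a^\beta=\sigma(\beta)a\beta^{-1}$; $N_s(a)=\sigma^{s-1}(a)\cdots a$, $\mathcal{D}_a^s(\beta)=\sigma^s(\beta)N_s(a)$. The linearized Reed–Solomon code $\mathcal{C}_k(\mathbf{a},\boldsymbol\beta)\subseteq S^n$ is the $S$-row span of the $k\times n$ matrix with rows $s=0,\ldots,k-1$ and columns $(i,j)$ (ordered $(1,1),\ldots,(1,n_1),\ldots,(\ell,n_\ell)$), entry $\mathcal{D}_{a_i}^s(\beta_{i,j})$. Sum-rank weight: for $\mathbf{u}\in S^s$, ${\rm rk}(\mathbf{u})$ is the number of nonzero diagonal entries of the Smith normal form over $R$ of the $m\times s$ coordinate matrix of $\mathbf{u}$ in an $R$-basis of $S$; for $\mathbf{e}=(\mathbf{e}^{(1)},\ldots,\mathbf{e}^{(\ell)})$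 with $\mathbf{e}^{(i)}\in S^{n_i}$, ${\rm wt}_{SR}(\mathbf{e})=\sum_i{\rm rk}(\mathbf{e}^{(i)})$. *)

theory Defs
  imports "HOL-Computational_Algebra.Polynomial"
begin

section \<open>Ring-theoretic setting: R a subring of the finite commutative ring S (the type)\<close>

definition subring_of :: "'a::comm_ring_1 set \<Rightarrow> bool" where
  "subring_of R \<longleftrightarrow> 0 \<in> R \<and> 1 \<in> R \<and> (\<forall>x\<in>R. \<forall>y\<in>R. x + y \<in> R \<and> x * y \<in> R \<and> - x \<in> R)"

definition ideal_of :: "'a::comm_ring_1 set \<Rightarrow> 'a set \<Rightarrow> bool" where
  "ideal_of R I \<longleftrightarrow> I \<subseteq> R \<and> 0 \<in> I \<and> (\<forall>x\<in>I. \<forall>y\<in>I. x + y \<in> I) \<and> (\<forall>r\<in>R. \<forall>x\<in>I. r * x \<in> I)"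

definition chain_ring :: "'a::comm_ring_1 set \<Rightarrow> bool" where
  "chain_ring R \<longleftrightarrow> subring_of R \<and> (\<forall>I J. ideal_of R I \<longrightarrow> ideal_of R J \<longrightarrow> I \<subseteq> J \<or> J \<subseteq> I)"

definition max_ideal :: "'a::comm_ring_1 set \<Rightarrow> 'a set" where
  "max_ideal R = {x \<in> R. \<not> (\<exists>y\<in>R. x * y = 1)}"

definition res_card :: "'a::comm_ring_1 set \<Rightarrow> nat" where
  "res_card R = card ((\<lambda>x. {x + y |y. y \<in> max_ideal R}) ` R)"

definition ext_ideal :: "'a::comm_ring_1 set \<Rightarrow> 'a set" where
  "ext_ideal R = {x. \<exists>(N::nat) f g. (\<forall>i<N. f i \<in> max_ideal R) \<and> x = (\<Sum>i<N. f i * g i)}"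

definition S_units :: "'a::comm_ring_1 set" where
  "S_units = {x. \<exists>y. x * y = 1}"

definition sinv :: "'a::comm_ring_1 \<Rightarrow> 'a" where
  "sinv x = (THE y. x * y = 1)"

text \<open>h is irreducible modulo m: its reduction has no factorisation into two
  non-constant (w.l.o.g. monic) factors.\<close>
definition irred_mod :: "'a::comm_ring_1 set \<Rightarrow> 'a poly \<Rightarrow> bool" where
  "irred_mod R h \<longleftrightarrow> degree h \<ge> 1 \<and>
     \<not> (\<exists>f g. (\<forall>i. coeff f i \<in> R) \<and> (\<forall>i. coeff g i \<in> R) \<and>
             lead_coeff f = 1 \<and> lead_coeff g = 1 \<and> degree f \<ge> 1 \<and> degree g \<ge> 1 \<and>
             (\<forall>i. coeff (h - f * g) i \<in> max_ideal R))"

text \<open>S = R[x]/(h): S is a free R-module with basis 1, theta, ..., theta^(m-1), where h(theta) = 0.\<close>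
definition R_basis :: "'a::comm_ring_1 set \<Rightarrow> nat \<Rightarrow> (nat \<Rightarrow> 'a) \<Rightarrow> bool" where
  "R_basis R m B \<longleftrightarrow> (\<forall>x. \<exists>!c. (\<forall>i<m. c i \<in> R) \<and> (\<forall>i\<ge>m. c i = 0) \<and> x = (\<Sum>i<m. c i * B i))"

definition coord :: "'a::comm_ring_1 set \<Rightarrow> nat \<Rightarrow> (nat \<Rightarrow> 'a) \<Rightarrow> 'a \<Rightarrow> nat \<Rightarrow> 'a" where
  "coord R m B x = (THE c. (\<forall>i<m. c i \<in> R) \<and> (\<forall>i\<ge>m. c i = 0) \<and> x = (\<Sum>i<m. c i * B i))"

definition ring_aut :: "('a::comm_ring_1 \<Rightarrow> 'a) \<Rightarrow> bool" where
  "ring_aut \<tau> \<longleftrightarrow> bij \<tau> \<and> (\<forall>x y. \<tau> (x + y) = \<tau> x + \<tau> y) \<and> (\<forall>x y. \<tau> (x * y) = \<tau> x * \<tau> y) \<and> \<tau> 1 = 1"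

definition galois_setting ::
  "'a::{comm_ring_1,finite} set \<Rightarrow> 'a poly \<Rightarrow> nat \<Rightarrow> 'a \<Rightarrow> ('a \<Rightarrow> 'a) \<Rightarrow> bool" where
  "galois_setting R h m \<theta> \<sigma> \<longleftrightarrow>
     chain_ring R \<and>
     (\<forall>i. coeff h i \<in> R) \<and> lead_coeff h = 1 \<and> degree h = m \<and> irred_mod R h \<and>
     poly h \<theta> = 0 \<and> R_basis R m (\<lambda>i. \<theta> ^ i) \<and>
     ring_aut \<sigma> \<and> {x. \<sigma> x = x} = R \<and>
     (\<forall>\<tau>. ring_aut \<tau> \<and> (\<forall>r\<in>R. \<tau> r = r) \<longrightarrow> (\<exists>i. \<tau> = \<sigma> ^^ i)) \<and>
     (\<forall>y. \<sigma> y - y ^ res_card R \<in> ext_ideal R)"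

definition mat_mul :: "(nat \<Rightarrow> nat \<Rightarrow> 'a::comm_ring_1) \<Rightarrow> (nat \<Rightarrow> nat \<Rightarrow> 'a) \<Rightarrow> nat \<Rightarrow> nat \<Rightarrow> nat \<Rightarrow> 'a" where
  "mat_mul A B p = (\<lambda>i k. \<Sum>j<p. A i j * B j k)"

definition mat_over :: "'a set \<Rightarrow> nat \<Rightarrow> nat \<Rightarrow> (nat \<Rightarrow> nat \<Rightarrow> 'a) \<Rightarrow> bool" where
  "mat_over R d1 d2 A \<longleftrightarrow> (\<forall>i<d1. \<forall>j<d2. A i j \<in> R)"

definition invertible_over :: "'a::comm_ring_1 set \<Rightarrow> nat \<Rightarrow> (nat \<Rightarrow> nat \<Rightarrow> 'a) \<Rightarrow> bool" where
  "invertible_over R d P \<longleftrightarrow> mat_over R d d P \<and>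
     (\<exists>P'. mat_over R d d P' \<and>
        (\<forall>i<d. \<forall>j<d. mat_mul P P' d i j = (if i = j then 1 else 0)) \<and>
        (\<forall>i<d. \<forall>j<d. mat_mul P' P d i j = (if i = j then 1 else 0)))"

definition smith_form :: "'a::comm_ring_1 set \<Rightarrow> nat \<Rightarrow> nat \<Rightarrow> (nat \<Rightarrow> nat \<Rightarrow> 'a) \<Rightarrow> bool" where
  "smith_form R d1 d2 D \<longleftrightarrow> (\<forall>i<d1. \<forall>j<d2. i \<noteq> j \<longrightarrow> D i j = 0) \<and>
     (\<forall>i. Suc i < min d1 d2 \<longrightarrow> (\<exists>c\<in>R. D (Suc i) (Suc i) = D i i * c))"

definition snf_rank_is :: "'a::comm_ring_1 set \<Rightarrow> nat \<Rightarrow> nat \<Rightarrow> (nat \<Rightarrow> nat \<Rightarrow> 'a) \<Rightarrow> nat \<Rightarrow> bool" where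
  "snf_rank_is R d1 d2 A r \<longleftrightarrow> (\<exists>P Q. invertible_over R d1 P \<and> invertible_over R d2 Q \<and>
      smith_form R d1 d2 (mat_mul (mat_mul P A d1) Q d2) \<and>
      r = card {i. i < min d1 d2 \<and> mat_mul (mat_mul P A d1) Q d2 i i \<noteq> 0})"

definition rk :: "'a::comm_ring_1 set \<Rightarrow> nat \<Rightarrow> nat \<Rightarrow> (nat \<Rightarrow> 'a) \<Rightarrow> nat" where
  "rk R m s u = (THE r. \<exists>B. R_basis R m B \<and> snf_rank_is R m s (\<lambda>i j. coord R m B (u j) i) r)"

definition wt_SR :: "'a::comm_ring_1 set \<Rightarrow> nat \<Rightarrow> nat \<Rightarrow> (nat \<Rightarrow> nat) \<Rightarrow> (nat \<Rightarrow> nat \<Rightarrow> 'a) \<Rightarrow> nat" where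
  "wt_SR R m l nb e = (\<Sum>i=1..l. rk R m (nb i) (\<lambda>j. e i (Suc j)))"

section \<open>Skew polynomials S[x;sigma], represented by their coefficient sequences\<close>

definition skew_mult :: "('a::comm_ring_1 \<Rightarrow> 'a) \<Rightarrow> 'a poly \<Rightarrow> 'a poly \<Rightarrow> 'a poly" where
  "skew_mult \<sigma> p q = (\<Sum>i\<le>degree p. \<Sum>j\<le>degree q. monom (coeff p i * (\<sigma> ^^ i) (coeff q j)) (i + j))"

definition skew_eval :: "('a::comm_ring_1 \<Rightarrow> 'a) \<Rightarrow> 'a poly \<Rightarrow> 'a \<Rightarrow> 'a" where
  "skew_eval \<sigma> P b = (THE c. \<exists>Q'. P = skew_mult \<sigma> Q' [:- b, 1:] + [:c:])"

definition Nrm :: "('a::comm_ring_1 \<Rightarrow> 'a) \<Rightarrow> nat \<Rightarrow> 'a \<Rightarrow> 'a" where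
  "Nrm \<sigma> s a = (\<Prod>i<s. (\<sigma> ^^ i) a)"

definition Dop :: "('a::comm_ring_1 \<Rightarrow> 'a) \<Rightarrow> nat \<Rightarrow> 'a \<Rightarrow> 'a \<Rightarrow> 'a" where
  "Dop \<sigma> s a \<beta> = (\<sigma> ^^ s) \<beta> * Nrm \<sigma> s a"

definition sconj :: "('a::comm_ring_1 \<Rightarrow> 'a) \<Rightarrow> 'a \<Rightarrow> 'a \<Rightarrow> 'a" where
  "sconj \<sigma> a \<beta> = \<sigma> \<beta> * a * sinv \<beta>"

definition LRS_code :: "('a::comm_ring_1 \<Rightarrow> 'a) \<Rightarrow> nat \<Rightarrow> nat \<Rightarrow> (nat \<Rightarrow> nat) \<Rightarrow> (nat \<Rightarrow> 'a) \<Rightarrow> (nat \<Rightarrow> nat \<Rightarrow> 'a) \<Rightarrow> (nat \<Rightarrow> nat \<Rightarrow> 'a) set" where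
  "LRS_code \<sigma> k l nb a \<beta> = {c. \<exists>u. \<forall>i\<in>{1..l}. \<forall>j\<in>{1..nb i}. c i j = (\<Sum>s<k. u s * Dop \<sigma> s (a i) (\<beta> i j))}"

definition R_lin_indep :: "'a::comm_ring_1 set \<Rightarrow> nat \<Rightarrow> (nat \<Rightarrow> 'a) \<Rightarrow> bool" where
  "R_lin_indep R N v \<longleftrightarrow> (\<forall>c. (\<forall>j\<in>{1..N}. c j \<in> R) \<longrightarrow> (\<Sum>j=1..N. c j * v j) = 0 \<longrightarrow> (\<forall>j\<in>{1..N}. c j = 0))"

end

theory Submission
  imports Defs "HOL-Library.FuncSet"
begin


locale crx =
  fixes R :: "'a::{comm_ring_1,finite} set"
  assumes chain: "chain_ring R"
begin

lemma sub: "subring_of R" using chain unfolding chain_ring_def by auto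

lemma R0[simp]: "0 \<in> R" and R1[simp]: "1 \<in> R"
  using sub unfolding subring_of_def by auto

lemma Radd[intro]: "x \<in> R \<Longrightarrow> y \<in> R \<Longrightarrow> x + y \<in> R"
  and Rmul[intro]: "x \<in> R \<Longrightarrow> y \<in> R \<Longrightarrow> x * y \<in> R"
  and Rneg[intro]: "x \<in> R \<Longrightarrow> - x \<in> R"
  using sub unfolding subring_of_def by auto

lemma Rdiff[intro]: "x \<in> R \<Longrightarrow> y \<in> R \<Longrightarrow> x - y \<in> R"
  using Radd[of x "-y"] Rneg[of y] by simp

lemma Rsum[intro]: "(\<And>i. i \<in> I \<Longrightarrow> f i \<in> R) \<Longrightarrow> sum f I \<in> R"
  by (induction I rule: infinite_finite_induct) auto

lemma Rprod[intro]: "(\<And>i. i \<in> I \<Longrightarrow> f i \<in> R) \<Longrightarrow> prod f I \<in> R"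
  by (induction I rule: infinite_finite_induct) auto

lemma Rpow[intro]: "x \<in> R \<Longrightarrow> x ^ n \<in> R"
  by (induction n) auto

lemma Rnum_of_nat[intro]: "of_nat n \<in> R"
  by (induction n) auto

lemma unit_in_R:
  assumes x: "x \<in> R" and u: "x * y = 1"
  shows "\<exists>z\<in>R. x * z = 1"
proof -
  have inj: "inj_on (\<lambda>z. x * z) R"
  proof (rule inj_onI)
    fix z1 z2 assume "x * z1 = x * z2"
    then have "y * (x * z1) = y * (x * z2)" by simp
    then show "z1 = z2" using u by (simp add: mult.assoc[symmetric] mult.commute)
  qed
  have sub: "(\<lambda>z. x * z) ` R \<subseteq> R" using x by auto
  have "card ((\<lambda>z. x * z) ` R) = card R" using inj by (simp add: card_image)
  then have "(\<lambda>z. x * z) ` R = R" using sub by (simp add: card_subset_eq)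
  then have "1 \<in> (\<lambda>z. x * z) ` R" by simp
  then show ?thesis by auto
qed

abbreviation "mm \<equiv> max_ideal R"

lemma mm_iff: "x \<in> mm \<longleftrightarrow> x \<in> R \<and> \<not> (\<exists>y. x * y = 1)"
  unfolding max_ideal_def using unit_in_R by blast

lemma notmm_unit: "x \<in> R \<Longrightarrow> x \<notin> mm \<Longrightarrow> \<exists>y\<in>R. x * y = 1"
  unfolding max_ideal_def by auto

lemma one_notin_mm[simp]: "1 \<notin> mm" using mm_iff by auto
lemma zero_in_mm[simp]: "0 \<in> mm" using mm_iff by auto
lemma mm_R: "x \<in> mm \<Longrightarrow> x \<in> R" using mm_iff by auto

lemma divides_total:
  assumes x: "x \<in> R" and y: "y \<in> R"
  shows "(\<exists>z\<in>R. y = x * z) \<or> (\<exists>z\<in>R. x = y * z)"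
proof -
  have id: "ideal_of R {x * z |z. z \<in> R}" if "x \<in> R" for x
    unfolding ideal_of_def
  proof (intro conjI ballI)
    show "{x * z |z. z \<in> R} \<subseteq> R" using that by auto
    show "0 \<in> {x * z |z. z \<in> R}" by (rule CollectI, rule exI[of _ 0]) simp
    fix a b assume "a \<in> {x * z |z. z \<in> R}" "b \<in> {x * z |z. z \<in> R}"
    then obtain z1 z2 where "z1 \<in> R" "z2 \<in> R" "a = x * z1" "b = x * z2" by blast
    then show "a + b \<in> {x * z |z. z \<in> R}" by (intro CollectI exI[of _ "z1+z2"]) (auto simp: distrib_left)
  next
    fix rr a assume "rr \<in> R" "a \<in> {x * z |z. z \<in> R}"
    then obtain z1 where "z1 \<in> R" "a = x * z1" by blast
    then show "rr * a \<in> {x * z |z. z \<in> R}" using \<open>rr \<in> R\<close> by (intro CollectI exI[of _ "rr*z1"]) (auto simp: mult.left_commute)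
  qed
  have "{x * z |z. z \<in> R} \<subseteq> {y * z |z. z \<in> R} \<or> {y * z |z. z \<in> R} \<subseteq> {x * z |z. z \<in> R}"
    using chain id[OF x] id[OF y] unfolding chain_ring_def by blast
  moreover have "x \<in> {x * z |z. z \<in> R}" "y \<in> {y * z |z. z \<in> R}"
    by (metis (mono_tags, lifting) R1 mem_Collect_eq mult.right_neutral)+
  ultimately show ?thesis by blast
qed

lemma mm_mult: "x \<in> mm \<Longrightarrow> y \<in> R \<Longrightarrow> x * y \<in> mm"
proof -
  assume x: "x \<in> mm" and y: "y \<in> R"
  have "\<not> (\<exists>w. x * y * w = 1)"
  proof
    assume "\<exists>w. x * y * w = 1"
    then obtain w where "x * (y * w) = 1" by (auto simp: mult.assoc)
    then show False using x mm_iff by blast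
  qed
  then show ?thesis using x y mm_iff by auto
qed

lemma mm_mult2: "x \<in> R \<Longrightarrow> y \<in> mm \<Longrightarrow> x * y \<in> mm"
  using mm_mult[of y x] by (simp add: mult.commute)

lemma mm_neg: "x \<in> mm \<Longrightarrow> - x \<in> mm"
  using mm_mult[of x "-1"] Rneg[OF R1] by simp

lemma mm_add:
  assumes x: "x \<in> mm" and y: "y \<in> mm"
  shows "x + y \<in> mm"
proof -
  have xR: "x \<in> R" and yR: "y \<in> R" using x y mm_R by auto
  from divides_total[OF xR yR] show ?thesis
  proof
    assume "\<exists>z\<in>R. y = x * z"
    then obtain z where z: "z \<in> R" "y = x * z" by auto
    have "x + y = x * (1 + z)" using z by (simp add: algebra_simps)
    then show ?thesis using mm_mult[OF x, of "1+z"] z Radd[OF R1, of z] by auto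
  next
    assume "\<exists>z\<in>R. x = y * z"
    then obtain z where z: "z \<in> R" "x = y * z" by auto
    have "x + y = y * (1 + z)" using z by (simp add: algebra_simps)
    then show ?thesis using mm_mult[OF y, of "1+z"] z Radd[OF R1, of z] by auto
  qed
qed

lemma mm_diff: "x \<in> mm \<Longrightarrow> y \<in> mm \<Longrightarrow> x - y \<in> mm"
  using mm_add[of x "-y"] mm_neg[of y] by simp

lemma one_plus_mm_unit: "z \<in> mm \<Longrightarrow> \<exists>w\<in>R. (1 + z) * w = 1"
proof -
  assume z: "z \<in> mm"
  have "1 + z \<notin> mm"
  proof
    assume "1 + z \<in> mm"
    then have "(1 + z) - z \<in> mm" using mm_diff z by blast
    then show False by simp
  qed
  then show ?thesis using notmm_unit[of "1+z"] z mm_R Radd[OF R1, of z] by auto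
qed

definition pi :: 'a where
  "pi = (SOME p. p \<in> mm \<and> (\<forall>y\<in>mm. \<exists>z\<in>R. y = p * z))"

lemma pi_ex: "\<exists>p. p \<in> mm \<and> (\<forall>y\<in>mm. \<exists>z\<in>R. y = p * z)"
proof -
  let ?I = "\<lambda>p. {p * z |z. z \<in> R}"
  have fin: "finite mm" by simp
  have ne: "mm \<noteq> {}" using zero_in_mm by blast
  let ?M = "Max ((\<lambda>p. card (?I p)) ` mm)"
  have "?M \<in> (\<lambda>p. card (?I p)) ` mm" using ne by (intro Max_in) auto
  then obtain p where p: "p \<in> mm" and pM: "card (?I p) = ?M" by auto
  have pmax: "\<forall>y\<in>mm. card (?I y) \<le> card (?I p)" unfolding pM by (intro ballI Max_ge; auto)
  have "\<exists>z\<in>R. y = p * z" if y: "y \<in> mm" for y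
  proof -
    have pR: "p \<in> R" and yR: "y \<in> R" using p y mm_R by auto
    from divides_total[OF pR yR] show ?thesis
    proof
      assume "\<exists>z\<in>R. y = p * z" then show ?thesis .
    next
      assume "\<exists>z\<in>R. p = y * z"
      then obtain z where z: "z \<in> R" "p = y * z" by auto
      have sub: "?I p \<subseteq> ?I y"
      proof
        fix v assume "v \<in> ?I p"
        then obtain w where w: "w \<in> R" "v = p * w" by blast
        then have "v = y * (z * w)" using z by (simp add: mult.assoc)
        then show "v \<in> ?I y" using w z by blast
      qed
      have "card (?I y) \<le> card (?I p)" using pmax y by auto
      moreover have "card (?I p) \<le> card (?I y)" using sub by (intro card_mono) auto
      ultimately have "?I p = ?I y" using card_subset_eq[OF _ sub] by simp
      moreover have "y \<in> ?I y" by (metis (mono_tags, lifting) R1 mem_Collect_eq mult.right_neutral)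
      ultimately show ?thesis by auto
    qed
  qed
  then show ?thesis using p by blast
qed

lemma pi_mm: "pi \<in> mm" and pi_gen: "y \<in> mm \<Longrightarrow> \<exists>z\<in>R. y = pi * z"
  using someI_ex[OF pi_ex] unfolding pi_def[symmetric] by auto

lemma pi_R: "pi \<in> R" using pi_mm mm_R by auto

lemma pi_nilp: "\<exists>K. pi ^ K = 0"
proof -
  have "\<not> inj (\<lambda>k::nat. pi ^ k)"
  proof
    assume "inj (\<lambda>k::nat. pi ^ k)"
    then have "finite (UNIV :: nat set)" using inj_on_finite[of "\<lambda>k::nat. pi ^ k" UNIV UNIV] by auto
    then show False by simp
  qed
  then obtain i j where ij: "i \<noteq> j" "pi ^ i = pi ^ j" unfolding inj_def by auto
  then obtain a b where ab: "b > 0" "pi ^ a = pi ^ (a + b)"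
    by (metis less_imp_add_positive nat_neq_iff zero_less_iff_neq_zero)
  have "pi ^ b \<in> mm" using ab(1) pi_mm
    by (metis gr0_conv_Suc mm_mult power_Suc pi_R Rpow)
  then obtain w where w: "w \<in> R" "(1 + - (pi ^ b)) * w = 1" using one_plus_mm_unit mm_neg by blast
  have "pi ^ a * (1 - pi ^ b) = 0" using ab(2) by (simp add: algebra_simps power_add)
  then have "pi ^ a * (1 - pi ^ b) * w = 0" by simp
  then have "pi ^ a = 0" using w(2) by (simp add: mult.assoc)
  then show ?thesis by blast
qed

definition Kn :: nat where "Kn = (LEAST K. pi ^ K = 0)"

lemma pi_Kn: "pi ^ Kn = 0" unfolding Kn_def using pi_nilp by (rule LeastI_ex)

lemma Kn_pos: "Kn > 0" using pi_Kn by (cases Kn) auto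

lemma pi_Kn1: "pi ^ (Kn - 1) \<noteq> 0"
proof
  assume a: "pi ^ (Kn - 1) = 0"
  have "(LEAST K. pi ^ K = 0) \<le> Kn - 1" by (rule Least_le) (rule a)
  then have "Kn \<le> Kn - 1" unfolding Kn_def .
  then show False using Kn_pos by simp
qed

definition socR :: "'a set" where "socR = {z \<in> R. \<forall>y\<in>mm. y * z = 0}"

lemma socR_nz: "\<exists>z\<in>socR. z \<noteq> 0"
proof -
  have "pi ^ (Kn - 1) \<in> socR"
  proof -
    have "y * pi ^ (Kn - 1) = 0" if ym: "y \<in> mm" for y
    proof -
      obtain z where "y = pi * z" using pi_gen[OF ym] by auto
      moreover have "pi ^ Kn = pi * pi ^ (Kn - 1)" using Kn_pos by (metis Suc_diff_1 power_Suc)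
      ultimately have "y * pi ^ (Kn - 1) = z * pi ^ Kn" by (simp add: ac_simps)
      then show ?thesis using pi_Kn by simp
    qed
    then show ?thesis unfolding socR_def using pi_R by auto
  qed
  then show ?thesis using pi_Kn1 by blast
qed

lemma card_socR: "card socR \<ge> 2"
proof -
  obtain z where "z \<in> socR" "z \<noteq> 0" using socR_nz by auto
  moreover have "0 \<in> socR" unfolding socR_def by auto
  ultimately have "{0, z} \<subseteq> socR" by auto
  then have "card {0, z} \<le> card socR" by (simp add: card_mono)
  then show ?thesis using \<open>z \<noteq> 0\<close> by simp
qed

lemma socR_sub:
  assumes x: "x \<in> R" "x \<noteq> 0" and y: "y \<in> socR"
  shows "\<exists>w\<in>R. y = x * w"
proof -
  have yR: "y \<in> R" using y unfolding socR_def by auto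
  from divides_total[OF x(1) yR] show ?thesis
  proof
    assume "\<exists>z\<in>R. y = x * z" then show ?thesis .
  next
    assume "\<exists>z\<in>R. x = y * z"
    then obtain z where z: "z \<in> R" "x = y * z" by auto
    show ?thesis
    proof (cases "z \<in> mm")
      case True
      then have "z * y = 0" using y unfolding socR_def by auto
      then show ?thesis using z x by (simp add: mult.commute)
    next
      case False
      then obtain w where w: "w \<in> R" "z * w = 1" using notmm_unit z by auto
      have "y = x * w" using z w by (metis mult.assoc mult.right_neutral)
      then show ?thesis using w by auto
    qed
  qed
qed

end



definition unitS :: "'a::comm_ring_1 \<Rightarrow> bool" where "unitS x \<longleftrightarrow> (\<exists>y. x * y = 1)"

lemma unitS_mult: "unitS x \<Longrightarrow> unitS y \<Longrightarrow> unitS (x * y)"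
  unfolding unitS_def by (metis mult.assoc mult.left_commute mult.right_neutral)

lemma unitS_factor: "unitS (x * y) \<Longrightarrow> unitS y"
  unfolding unitS_def by (metis mult.assoc mult.commute)

lemma unitS_one[simp]: "unitS 1" unfolding unitS_def by auto

lemma sinv: "unitS x \<Longrightarrow> x * sinv x = 1"
proof -
  assume "unitS x"
  then obtain y where y: "x * y = 1" unfolding unitS_def by auto
  have "\<exists>!y. x * y = 1"
  proof (rule ex1I[of _ y])
    fix z assume "x * z = 1"
    then have "y * (x * z) = y" by simp
    then show "z = y" using y by (simp add: mult.assoc[symmetric] mult.commute)
  qed (rule y)
  then show ?thesis unfolding sinv_def by (rule theI')
qed

lemma sinv2: "unitS x \<Longrightarrow> sinv x * x = 1" using sinv by (simp add: mult.commute)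

lemma coeff_sum_monom: "coeff (\<Sum>i<n. monom (c i) i) k = (if k < n then c k else 0)"
  by (simp add: coeff_sum coeff_monom)

definition Rc :: "'a::comm_ring_1 set \<Rightarrow> 'a poly \<Rightarrow> bool" where
  "Rc R p \<longleftrightarrow> (\<forall>i. coeff p i \<in> R)"

locale gx =
  fixes R :: "'a::{comm_ring_1,finite} set" and h :: "'a poly" and m :: nat and \<theta> :: 'a
    and \<sigma> :: "'a \<Rightarrow> 'a"
  assumes gs: "galois_setting R h m \<theta> \<sigma>"
begin

sublocale crx R using gs unfolding galois_setting_def by unfold_locales auto

lemma h_R: "Rc R h" and h_lead: "lead_coeff h = 1" and h_deg: "degree h = m"
  and h_irr: "irred_mod R h" and h_root: "poly h \<theta> = 0" and basis: "R_basis R m (\<lambda>i. \<theta> ^ i)"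
  and aut: "ring_aut \<sigma>" and fixR: "{x. \<sigma> x = x} = R"
  using gs unfolding galois_setting_def Rc_def by auto

lemma m_pos: "m \<ge> 1" using h_irr h_deg unfolding irred_mod_def by auto

lemma sig_add: "\<sigma> (x + y) = \<sigma> x + \<sigma> y" and sig_mult: "\<sigma> (x * y) = \<sigma> x * \<sigma> y"
  and sig_one: "\<sigma> 1 = 1" and sig_bij: "bij \<sigma>"
  using aut unfolding ring_aut_def by auto

lemma sig_zero: "\<sigma> 0 = 0" using sig_add[of 0 0] by simp

lemma sig_neg: "\<sigma> (- x) = - \<sigma> x"
  using sig_add[of x "-x"] sig_zero by (metis neg_eq_iff_add_eq_0 add.right_inverse)

lemma sig_diff: "\<sigma> (x - y) = \<sigma> x - \<sigma> y"
  using sig_add[of x "-y"] sig_neg[of y] by simp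

lemma sig_inj: "\<sigma> x = \<sigma> y \<Longrightarrow> x = y" using sig_bij bij_def inj_def by metis

lemma sig_R: "x \<in> R \<Longrightarrow> \<sigma> x = x" using fixR by auto

lemma sigp_add: "(\<sigma> ^^ i) (x + y) = (\<sigma> ^^ i) x + (\<sigma> ^^ i) y"
  by (induction i) (auto simp: sig_add)
lemma sigp_mult: "(\<sigma> ^^ i) (x * y) = (\<sigma> ^^ i) x * (\<sigma> ^^ i) y"
  by (induction i) (auto simp: sig_mult)
lemma sigp_one: "(\<sigma> ^^ i) 1 = 1" by (induction i) (auto simp: sig_one)
lemma sigp_zero: "(\<sigma> ^^ i) 0 = 0" by (induction i) (auto simp: sig_zero)
lemma sigp_neg: "(\<sigma> ^^ i) (- x) = - (\<sigma> ^^ i) x" by (induction i) (auto simp: sig_neg)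
lemma sigp_diff: "(\<sigma> ^^ i) (x - y) = (\<sigma> ^^ i) x - (\<sigma> ^^ i) y" by (induction i) (auto simp: sig_diff)
lemma sigp_R: "x \<in> R \<Longrightarrow> (\<sigma> ^^ i) x = x" by (induction i) (auto simp: sig_R)
lemma sigp_inj: "(\<sigma> ^^ i) x = (\<sigma> ^^ i) y \<Longrightarrow> x = y"
  by (induction i arbitrary: x y) (auto dest: sig_inj)
lemma sigp_sum: "(\<sigma> ^^ i) (sum f A) = (\<Sum>x\<in>A. (\<sigma> ^^ i) (f x))"
  by (induction A rule: infinite_finite_induct) (auto simp: sigp_zero sigp_add)
lemma sigp_prod: "(\<sigma> ^^ i) (prod f A) = (\<Prod>x\<in>A. (\<sigma> ^^ i) (f x))"
  by (induction A rule: infinite_finite_induct) (auto simp: sigp_one sigp_mult)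
lemma sigp_pow: "(\<sigma> ^^ i) (x ^ n) = ((\<sigma> ^^ i) x) ^ n"
  by (induction n) (auto simp: sigp_one sigp_mult)
lemma sig_sum: "\<sigma> (sum f A) = (\<Sum>x\<in>A. \<sigma> (f x))"
  using sigp_sum[of 1] by simp
lemma sig_pi: "\<sigma> pi = pi" using sig_R pi_R by auto
lemma sigp_unit: "unitS x \<Longrightarrow> (\<sigma> ^^ i) (sinv x) = sinv ((\<sigma> ^^ i) x) \<and> unitS ((\<sigma> ^^ i) x)"
proof -
  assume u: "unitS x"
  have e: "(\<sigma> ^^ i) x * (\<sigma> ^^ i) (sinv x) = 1" using sinv[OF u] sigp_mult sigp_one by metis
  then have u2: "unitS ((\<sigma> ^^ i) x)" unfolding unitS_def by auto
  have "sinv ((\<sigma> ^^ i) x) = sinv ((\<sigma> ^^ i) x) * ((\<sigma> ^^ i) x * (\<sigma> ^^ i) (sinv x))" using e by simp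
  also have "\<dots> = (\<sigma> ^^ i) (sinv x)" using sinv2[OF u2] by (simp add: mult.assoc[symmetric])
  finally show ?thesis using u2 by simp
qed

lemma Rc_add: "Rc R p \<Longrightarrow> Rc R q \<Longrightarrow> Rc R (p + q)" unfolding Rc_def by auto
lemma Rc_diff: "Rc R p \<Longrightarrow> Rc R q \<Longrightarrow> Rc R (p - q)" unfolding Rc_def by auto
lemma Rc_mult: "Rc R p \<Longrightarrow> Rc R q \<Longrightarrow> Rc R (p * q)" unfolding Rc_def by (auto simp: coeff_mult)
lemma Rc_monom: "c \<in> R \<Longrightarrow> Rc R (monom c n)" unfolding Rc_def by (auto simp: coeff_monom)
lemma Rc_zero: "Rc R 0" unfolding Rc_def by auto
lemma Rc_one: "Rc R 1" unfolding Rc_def by (auto simp: coeff_1)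
lemma Rc_smult: "c \<in> R \<Longrightarrow> Rc R p \<Longrightarrow> Rc R (smult c p)" unfolding Rc_def by auto

lemma div_monic:
  assumes g: "Rc R g" "lead_coeff g = 1" and f: "Rc R f"
  shows "\<exists>q s. Rc R q \<and> Rc R s \<and> f = q * g + s \<and> (s = 0 \<or> degree s < degree g)"
  using f
proof (induction "degree f" arbitrary: f rule: less_induct)
  case less
  show ?case
  proof (cases "degree g = 0")
    case True
    then have "g = 1" using g(2) degree_0_id[OF True] by (simp add: one_pCons)
    then show ?thesis using less.prems by (intro exI[of _ f] exI[of _ 0]) (auto simp: Rc_zero)
  next
    case gpos: False
    show ?thesis
    proof (cases "degree f < degree g")
      case True
      then show ?thesis using less.prems by (intro exI[of _ 0] exI[of _ f]) (auto simp: Rc_zero)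
    next
      case False
      define d where "d = degree f - degree g"
      define f' where "f' = f - monom (lead_coeff f) d * g"
      have Rf': "Rc R f'" unfolding f'_def
        using less.prems g by (intro Rc_diff Rc_mult Rc_monom) (auto simp: Rc_def)
      have "\<forall>i > degree f - 1. coeff f' i = 0"
      proof (intro allI impI)
        fix i assume i: "i > degree f - 1"
        show "coeff f' i = 0"
        proof (cases "i = degree f")
          case True
          then have "coeff (monom (lead_coeff f) d * g) i = lead_coeff f * coeff g (degree g)"
            using False unfolding d_def by (simp add: coeff_monom_mult)
          then show ?thesis using True g(2) unfolding f'_def by simp
        next
          case ne: False
          then have i2: "i > degree f" using i gpos False by linarith
          have "coeff (monom (lead_coeff f) d * g) i = 0"
            using i2 False unfolding d_def by (auto simp: coeff_monom_mult coeff_eq_0)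
          then show ?thesis using i2 unfolding f'_def by (simp add: coeff_eq_0)
        qed
      qed
      then have "degree f' \<le> degree f - 1" by (rule degree_le)
      then have "degree f' < degree f" using gpos False by linarith
      then obtain q s where qs: "Rc R q" "Rc R s" "f' = q * g + s" "s = 0 \<or> degree s < degree g"
        using less.hyps Rf' by blast
      have "f = (q + monom (lead_coeff f) d) * g + s" using qs(3) unfolding f'_def by (simp add: algebra_simps)
      moreover have "Rc R (q + monom (lead_coeff f) d)"
        using qs(1) less.prems by (intro Rc_add Rc_monom) (auto simp: Rc_def)
      ultimately show ?thesis using qs by blast
    qed
  qed
qed


lemma unitS_neg: "unitS x \<Longrightarrow> unitS (- x)"
  unfolding unitS_def by (metis minus_mult_minus)

lemma unitS_R: "x \<in> R \<Longrightarrow> x \<notin> mm \<Longrightarrow> unitS x"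
  using notmm_unit unfolding unitS_def by blast

lemma poly_sum_form: "degree p < N \<Longrightarrow> poly p (x::'a) = (\<Sum>i<N. coeff p i * x ^ i)"
proof -
  assume d: "degree p < N"
  have "poly p x = (\<Sum>i\<le>degree p. coeff p i * x ^ i)" by (simp add: poly_altdef)
  also have "\<dots> = (\<Sum>i<N. coeff p i * x ^ i)"
    using d by (intro sum.mono_neutral_left) (auto simp: coeff_eq_0)
  finally show ?thesis .
qed

lemma piS:
  assumes "\<forall>i. coeff p i \<in> mm"
  shows "\<exists>w. poly p (x::'a) = pi * w"
proof -
  have "\<forall>i. \<exists>z. coeff p i = pi * z" using assms pi_gen by blast
  then obtain z where z: "\<And>i. coeff p i = pi * z i" by metis
  have "poly p x = (\<Sum>i\<le>degree p. pi * (z i * x ^ i))" unfolding poly_altdef z by (simp add: mult.assoc)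
  also have "\<dots> = pi * (\<Sum>i\<le>degree p. z i * x ^ i)" by (simp add: sum_distrib_left)
  finally show ?thesis by blast
qed

lemma one_plus_pi_unit: "unitS (1 + pi * y)"
proof -
  define z where "z = - (pi * y)"
  have "z = (- 1) * (pi * y)" unfolding z_def by simp
  then have "z ^ Kn = (- 1) ^ Kn * (pi ^ Kn * y ^ Kn)"
    by (simp only: power_mult_distrib)
  then have z0: "z ^ Kn = 0" using pi_Kn by simp
  have e: "1 - z ^ Kn = (1 - z) * (\<Sum>i<Kn. z ^ i)" by (rule one_diff_power_eq)
  have z1: "1 - z = 1 + pi * y" unfolding z_def by simp
  have "(1 - z) * (\<Sum>i<Kn. z ^ i) = 1" using e z0 by simp
  then have "(1 + pi * y) * (\<Sum>i<Kn. z ^ i) = 1" unfolding z1 .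
  then show ?thesis unfolding unitS_def by blast
qed

lemma unit_plus_pi: "unitS x \<Longrightarrow> unitS (x + pi * w)"
proof -
  assume u: "unitS x"
  have "x * (1 + pi * (w * sinv x)) = x + pi * w * (x * sinv x)" by (simp add: algebra_simps)
  then have "x + pi * w = x * (1 + pi * (w * sinv x))"
    using sinv[OF u] by simp
  then show ?thesis using unitS_mult[OF u one_plus_pi_unit] by simp
qed

definition Umon :: "nat \<Rightarrow> bool" where
  "Umon d \<longleftrightarrow> (\<forall>g. Rc R g \<and> lead_coeff g = 1 \<and> degree g = d \<longrightarrow> unitS (poly g \<theta>))"

lemma V:
  assumes f: "Rc R f" and ex: "\<exists>i. coeff f i \<notin> mm" and U: "\<forall>d \<le> degree f. Umon d"
  shows "unitS (poly f \<theta>)"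
proof -
  define D where "D = {i. coeff f i \<notin> mm}"
  have Dsub: "D \<subseteq> {..degree f}"
  proof
    fix i assume "i \<in> D"
    then have "coeff f i \<noteq> 0" unfolding D_def by auto
    then show "i \<in> {..degree f}" using le_degree by auto
  qed
  then have finD: "finite D" using finite_subset by blast
  have neD: "D \<noteq> {}" using ex unfolding D_def by auto
  define d where "d = Max D"
  have dD: "d \<in> D" unfolding d_def using finD neD by (rule Max_in)
  have dle: "d \<le> degree f" using dD Dsub by auto
  have above: "coeff f i \<in> mm" if "i > d" for i
  proof (rule ccontr)
    assume "coeff f i \<notin> mm"
    then have "i \<in> D" unfolding D_def by auto
    then have "i \<le> d" unfolding d_def using finD by simp
    then show False using that by simp
  qed
  define c where "c = coeff f d"
  have cR: "c \<in> R" using f unfolding c_def Rc_def by auto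
  have cnm: "c \<notin> mm" using dD unfolding D_def c_def by auto
  obtain u where u: "u \<in> R" "c * u = 1" using notmm_unit[OF cR cnm] by auto
  define g where "g = (\<Sum>i<Suc d. monom (if i = d then 1 else u * coeff f i) i)"
  have cg: "coeff g i = (if i < Suc d then (if i = d then 1 else u * coeff f i) else 0)" for i
    unfolding g_def by (rule coeff_sum_monom)
  have Rg: "Rc R g" unfolding Rc_def cg using u f by (auto simp: Rc_def)
  have dg: "degree g = d"
  proof (rule antisym)
    show "degree g \<le> d" by (rule degree_le) (auto simp: cg)
    show "d \<le> degree g" by (rule le_degree) (simp add: cg)
  qed
  have lg: "lead_coeff g = 1" using dg cg by simp
  have ug: "unitS (poly g \<theta>)" using U dle Rg lg dg unfolding Umon_def by blast
  define p2 where "p2 = f - smult c g"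
  have "coeff p2 i \<in> mm" for i
  proof -
    consider "i < d" | "i = d" | "i > d" by linarith
    then show ?thesis
    proof cases
      case 1 then show ?thesis unfolding p2_def using u(2) by (simp add: cg mult.assoc[symmetric])
    next
      case 2 then show ?thesis unfolding p2_def by (simp add: cg c_def)
    next
      case 3 then show ?thesis unfolding p2_def using above[OF 3] by (simp add: cg)
    qed
  qed
  then obtain w where w: "poly p2 \<theta> = pi * w" using piS by blast
  have "poly f \<theta> = c * poly g \<theta> + poly p2 \<theta>" unfolding p2_def by simp
  then have "poly f \<theta> = c * poly g \<theta> + pi * w" using w by simp
  moreover have "unitS c" using u unfolding unitS_def by auto
  ultimately show ?thesis using unit_plus_pi unitS_mult ug by metis
qed

lemma U: "d < m \<Longrightarrow> Umon d"
proof (induction d rule: less_induct)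
  case (less d)
  show ?case unfolding Umon_def
  proof (intro allI impI)
    fix g assume g: "Rc R g \<and> lead_coeff g = 1 \<and> degree g = d"
    show "unitS (poly g \<theta>)"
    proof (cases "d = 0")
      case True
      have "coeff g (degree g) = 1" "degree g = 0" using g True by auto
      then have "coeff g 0 = 1" by simp
      then have "g = [:1:]" using g True degree_0_id[of g] by simp
      then have "g = 1" by (simp add: one_pCons)
      then show ?thesis by simp
    next
      case dpos: False
      obtain q s where qs: "Rc R q" "Rc R s" "h = q * g + s" "s = 0 \<or> degree s < degree g"
        using div_monic[of g h] g h_R by blast
      have eq: "poly q \<theta> * poly g \<theta> = - poly s \<theta>"
        using h_root qs(3) by (simp add: eq_neg_iff_add_eq_0)
      show ?thesis
      proof (cases "\<exists>i. coeff s i \<notin> mm")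
        case True
        then have sne: "s \<noteq> 0" by auto
        then have ds: "degree s < d" using qs(4) g by auto
        have "unitS (poly s \<theta>)"
          using V[OF qs(2) True] less.IH ds less.prems by auto
        then have "unitS (poly q \<theta> * poly g \<theta>)" using eq unitS_neg by fastforce
        then show ?thesis by (rule unitS_factor)
      next
        case False
        then have smm: "\<forall>i. coeff s i \<in> mm" by auto
        have sdeg: "s = 0 \<or> degree s < d" using qs(4) g by auto
        have qne: "q \<noteq> 0"
        proof
          assume "q = 0"
          then have "h = s" using qs(3) by simp
          then show False using sdeg h_lead h_deg less.prems by auto
        qed
        have gd: "coeff g d = 1" using g by metis
        have lq: "coeff (q * g) (degree q + d) = lead_coeff q"
          using coeff_mult_degree_sum[of q g] g gd by simp
        then have dqg: "degree (q * g) = degree q + d"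
          using qne degree_mult_le[of q g] g le_degree[of "q*g" "degree q + d"] by auto
        have "degree h = degree (q * g)"
        proof (cases "s = 0")
          case True then show ?thesis using qs(3) by simp
        next
          case False
          then have "degree s < degree (q * g)" using sdeg dqg by auto
          then show ?thesis using qs(3) degree_add_eq_left by metis
        qed
        then have mdeg: "m = degree q + d" using h_deg dqg by simp
        have "coeff h m = lead_coeff q + coeff s m"
          using qs(3) mdeg lq by simp
        moreover have "coeff s m = 0" using sdeg less.prems by (auto intro: coeff_eq_0)
        ultimately have lq1: "lead_coeff q = 1" using h_lead h_deg by simp
        have "\<exists>f g. (\<forall>i. coeff f i \<in> R) \<and> (\<forall>i. coeff g i \<in> R) \<and>
             lead_coeff f = 1 \<and> lead_coeff g = 1 \<and> degree f \<ge> 1 \<and> degree g \<ge> 1 \<and>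
             (\<forall>i. coeff (h - f * g) i \<in> mm)"
          using qs g lq1 mdeg less.prems dpos smm unfolding Rc_def
          by (intro exI[of _ q] exI[of _ g]) auto
        then show ?thesis using h_irr unfolding irred_mod_def by blast
      qed
    qed
  qed
qed

lemma nonunit_pi: "\<not> unitS z \<Longrightarrow> \<exists>w. z = pi * w"
proof -
  assume nu: "\<not> unitS z"
  obtain c where c: "\<forall>i<m. c i \<in> R" "\<forall>i\<ge>m. c i = 0" "z = (\<Sum>i<m. c i * \<theta> ^ i)"
    using basis unfolding R_basis_def by blast
  define f where "f = (\<Sum>i<m. monom (c i) i)"
  have cf: "coeff f i = c i" for i unfolding f_def coeff_sum_monom using c by auto
  have df: "degree f < m"
  proof -
    have "degree f \<le> m - 1" by (rule degree_le) (use c m_pos in \<open>auto simp: cf\<close>)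
    then show ?thesis using m_pos by linarith
  qed
  have pf: "poly f \<theta> = z" using poly_sum_form[OF df] c by (simp add: cf)
  have Rf: "Rc R f" unfolding Rc_def cf using c by (metis R0 not_le)
  show ?thesis
  proof (cases "\<exists>i. coeff f i \<notin> mm")
    case True
    have "unitS (poly f \<theta>)" using V[OF Rf True] U df by auto
    then show ?thesis using nu pf by simp
  next
    case False
    then show ?thesis using piS[of f \<theta>] pf by auto
  qed
qed

lemma decomp: "z = 0 \<or> (\<exists>k u. unitS u \<and> z = pi ^ k * u)"
proof -
  have "\<forall>z. (\<exists>w. z = pi ^ (Kn - i) * w) \<longrightarrow> z = 0 \<or> (\<exists>k u. unitS u \<and> z = pi ^ k * u)" for i
  proof (induction i)
    case 0
    then show ?case using pi_Kn by auto
  next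
    case (Suc i)
    show ?case
    proof (intro allI impI)
      fix z assume "\<exists>w. z = pi ^ (Kn - Suc i) * w"
      then obtain w where w: "z = pi ^ (Kn - Suc i) * w" by auto
      show "z = 0 \<or> (\<exists>k u. unitS u \<and> z = pi ^ k * u)"
      proof (cases "unitS w")
        case True then show ?thesis using w by blast
      next
        case False
        then obtain w' where w': "w = pi * w'" using nonunit_pi by blast
        show ?thesis
        proof (cases "Suc i \<le> Kn")
          case True
          then have "z = pi ^ (Kn - i) * w'" using w w'
            by (metis Suc_diff_le diff_Suc_Suc mult.assoc power_Suc2 Suc_le_lessD diff_Suc_1 Suc_diff_Suc)
          then show ?thesis using Suc.IH by blast
        next
          case False
          then have "z = pi ^ (Kn - i) * z" by simp
          then show ?thesis using Suc.IH by blast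
        qed
      qed
    qed
  qed
  then show ?thesis by (metis diff_self_eq_0 mult_1 power_0)
qed

end



definition idm :: "nat \<Rightarrow> nat \<Rightarrow> 'a::comm_ring_1" where "idm = (\<lambda>i j. if i = j then 1 else 0)"

lemma mat_mul_assoc: "mat_mul (mat_mul A B p) C q = mat_mul A (mat_mul B C q) p"
  unfolding mat_mul_def
proof (intro ext)
  fix i k
  show "(\<Sum>j<q. (\<Sum>n<p. A i n * B n j) * C j k) = (\<Sum>j<p. A i j * (\<Sum>n<q. B j n * C n k))"
    by (simp add: sum_distrib_left sum_distrib_right mult.assoc) (subst sum.swap, simp)
qed

lemma mat_mul_id_left: "i < d \<Longrightarrow> mat_mul idm A d i k = A i k"
  unfolding mat_mul_def idm_def by (simp add: if_distrib[of "\<lambda>z. z * _"] sum.delta cong: if_cong)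

lemma mat_mul_id_right: "k < d \<Longrightarrow> mat_mul A idm d i k = A i k"
  unfolding mat_mul_def idm_def by (simp add: if_distrib[of "\<lambda>z. _ * z"] sum.delta' cong: if_cong)

lemma mat_mul_cong:
  assumes "\<And>j. j < p \<Longrightarrow> A i j = A' i j" "\<And>j. j < p \<Longrightarrow> B j k = B' j k"
  shows "mat_mul A B p i k = mat_mul A' B' p i k"
  unfolding mat_mul_def using assms by (intro sum.cong) auto

context crx
begin

lemma mat_over_mul: "mat_over R d1 p A \<Longrightarrow> mat_over R p d2 B \<Longrightarrow> mat_over R d1 d2 (mat_mul A B p)"
  unfolding mat_over_def mat_mul_def by (auto intro!: Rsum)

lemma mat_over_idm: "mat_over R d d idm"
  unfolding mat_over_def idm_def by auto

lemma invertible_idm: "invertible_over R d idm"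
  unfolding invertible_over_def using mat_over_idm
  by (intro conjI exI[of _ idm]) (auto simp: mat_mul_id_left, auto simp: idm_def)

lemma invertible_mul:
  assumes P: "invertible_over R d P" and Q: "invertible_over R d Q"
  shows "invertible_over R d (mat_mul P Q d)"
proof -
  obtain P' where P': "mat_over R d d P'" "\<forall>i<d. \<forall>j<d. mat_mul P P' d i j = (if i = j then 1 else 0)"
    "\<forall>i<d. \<forall>j<d. mat_mul P' P d i j = (if i = j then 1 else 0)" and PR: "mat_over R d d P"
    using P unfolding invertible_over_def by blast
  obtain Q' where Q': "mat_over R d d Q'" "\<forall>i<d. \<forall>j<d. mat_mul Q Q' d i j = (if i = j then 1 else 0)"
    "\<forall>i<d. \<forall>j<d. mat_mul Q' Q d i j = (if i = j then 1 else 0)" and QR: "mat_over R d d Q"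
    using Q unfolding invertible_over_def by blast
  have e1: "mat_mul (mat_mul P Q d) (mat_mul Q' P' d) d i k = (if i = k then 1 else 0)" if "i < d" "k < d" for i k
  proof -
    have "mat_mul (mat_mul P Q d) (mat_mul Q' P' d) d i k = mat_mul P (mat_mul (mat_mul Q Q' d) P' d) d i k"
      by (simp add: mat_mul_assoc)
    also have "\<dots> = mat_mul P (mat_mul idm P' d) d i k"
      by (intro mat_mul_cong mat_mul_cong) (auto simp: Q'(2) idm_def)
    also have "\<dots> = mat_mul P P' d i k"
      by (intro mat_mul_cong) (auto simp: mat_mul_id_left)
    finally show ?thesis using P'(2) that by simp
  qed
  have e2: "mat_mul (mat_mul Q' P' d) (mat_mul P Q d) d i k = (if i = k then 1 else 0)" if "i < d" "k < d" for i k
  proof -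
    have "mat_mul (mat_mul Q' P' d) (mat_mul P Q d) d i k = mat_mul Q' (mat_mul (mat_mul P' P d) Q d) d i k"
      by (simp add: mat_mul_assoc)
    also have "\<dots> = mat_mul Q' (mat_mul idm Q d) d i k"
      by (intro mat_mul_cong mat_mul_cong) (auto simp: P'(3) idm_def)
    also have "\<dots> = mat_mul Q' Q d i k"
      by (intro mat_mul_cong) (auto simp: mat_mul_id_left)
    finally show ?thesis using Q'(3) that by simp
  qed
  show ?thesis unfolding invertible_over_def
    using e1 e2 mat_over_mul[OF PR QR] mat_over_mul[OF Q'(1) P'(1)] by blast
qed

definition dvdR :: "'a \<Rightarrow> 'a \<Rightarrow> bool" where "dvdR x y \<longleftrightarrow> (\<exists>z\<in>R. y = x * z)"

lemma dvdR_sum: "(\<And>j. j \<in> J \<Longrightarrow> dvdR x (f j)) \<Longrightarrow> dvdR x (sum f J)"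
proof (induction J rule: infinite_finite_induct)
  case (infinite A) then show ?case unfolding dvdR_def by (auto intro!: bexI[of _ 0])
next
  case empty then show ?case unfolding dvdR_def by (auto intro!: bexI[of _ 0])
next
  case (insert a F)
  have "dvdR x (f a)" "dvdR x (sum f F)" using insert by auto
  then obtain z1 z2 where "z1 \<in> R" "f a = x * z1" "z2 \<in> R" "sum f F = x * z2"
    unfolding dvdR_def by blast
  then show ?case using insert unfolding dvdR_def
    by (auto intro!: bexI[of _ "z1 + z2"] simp: distrib_left)
qed

lemma dvdR_mult: "a \<in> R \<Longrightarrow> dvdR x y \<Longrightarrow> dvdR x (a * y)"
  unfolding dvdR_def by (auto simp: mult.left_commute intro!: bexI[of _ "a * _"])

lemma dvdR_mult2: "a \<in> R \<Longrightarrow> dvdR x y \<Longrightarrow> dvdR x (y * a)"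
  using dvdR_mult by (simp add: mult.commute)

lemma dvdR_diff: "dvdR x y \<Longrightarrow> dvdR x z \<Longrightarrow> dvdR x (y - z)"
  unfolding dvdR_def by (auto simp: right_diff_distrib intro!: bexI[of _ "_ - _"])

lemma dvdR_refl: "dvdR x x" unfolding dvdR_def by (auto intro!: bexI[of _ 1])

lemma dvd_mat_left: "mat_over R d1 p P \<Longrightarrow> i < d1 \<Longrightarrow> (\<forall>j<p. dvdR x (B j k)) \<Longrightarrow> dvdR x (mat_mul P B p i k)"
  unfolding mat_mul_def mat_over_def by (auto intro!: dvdR_sum dvdR_mult)

lemma dvd_mat_right: "mat_over R p d2 Q \<Longrightarrow> k < d2 \<Longrightarrow> (\<forall>j<p. dvdR x (B i j)) \<Longrightarrow> dvdR x (mat_mul B Q p i k)"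
  unfolding mat_mul_def mat_over_def by (auto intro!: dvdR_sum dvdR_mult2)

lemma exists_min_div:
  assumes fin: "finite E" and ne: "E \<noteq> {}" and sub: "E \<subseteq> R"
  shows "\<exists>x\<in>E. \<forall>y\<in>E. dvdR x y"
proof -
  let ?I = "\<lambda>p. {p * z |z. z \<in> R}"
  let ?M = "Max ((\<lambda>p. card (?I p)) ` E)"
  have "?M \<in> (\<lambda>p. card (?I p)) ` E" using ne fin by (intro Max_in) auto
  then obtain p where p: "p \<in> E" and pM: "card (?I p) = ?M" by auto
  have pmax: "\<forall>y\<in>E. card (?I y) \<le> card (?I p)" unfolding pM using fin by (intro ballI Max_ge; auto)
  have "dvdR p y" if y: "y \<in> E" for y
  proof -
    have pR: "p \<in> R" and yR: "y \<in> R" using p y sub by auto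
    from divides_total[OF pR yR] show ?thesis
    proof
      assume "\<exists>z\<in>R. y = p * z" then show ?thesis unfolding dvdR_def .
    next
      assume "\<exists>z\<in>R. p = y * z"
      then obtain z where z: "z \<in> R" "p = y * z" by auto
      have subs: "?I p \<subseteq> ?I y"
      proof
        fix v assume "v \<in> ?I p"
        then obtain w where w: "w \<in> R" "v = p * w" by blast
        then have "v = y * (z * w)" using z by (simp add: mult.assoc)
        then show "v \<in> ?I y" using w z by blast
      qed
      have "card (?I y) \<le> card (?I p)" using pmax y by auto
      moreover have "card (?I p) \<le> card (?I y)" using subs by (intro card_mono) auto
      ultimately have "?I p = ?I y" using card_subset_eq[OF _ subs] by simp
      moreover have "y \<in> ?I y" by (metis (mono_tags, lifting) R1 mem_Collect_eq mult.right_neutral)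
      ultimately show ?thesis unfolding dvdR_def by auto
    qed
  qed
  then show ?thesis using p by blast
qed


definition sw :: "nat \<Rightarrow> nat \<Rightarrow> nat \<Rightarrow> nat" where
  "sw a b i = (if i = a then b else if i = b then a else i)"

definition Pm :: "nat \<Rightarrow> nat \<Rightarrow> nat \<Rightarrow> nat \<Rightarrow> 'a" where
  "Pm a b = (\<lambda>i j. if j = sw a b i then 1 else 0)"

lemma sw_sw[simp]: "sw a b (sw a b i) = i" unfolding sw_def by auto
lemma sw_lt: "a < d \<Longrightarrow> b < d \<Longrightarrow> i < d \<Longrightarrow> sw a b i < d" unfolding sw_def by auto
lemma sw_eq: "(j = sw a b i) \<longleftrightarrow> (i = sw a b j)" unfolding sw_def by auto

lemma Pm_left: "a < d \<Longrightarrow> b < d \<Longrightarrow> i < d \<Longrightarrow> mat_mul (Pm a b) A d i k = A (sw a b i) k"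
  unfolding mat_mul_def Pm_def using sw_lt[of a d b i]
  by (simp add: if_distrib[of "\<lambda>z. z * _"] sum.delta' cong: if_cong)

lemma Pm_right: "a < d \<Longrightarrow> b < d \<Longrightarrow> k < d \<Longrightarrow> mat_mul A (Pm a b) d i k = A i (sw a b k)"
  unfolding mat_mul_def Pm_def using sw_lt[of a d b k]
  by (simp add: sw_eq[of _ a b] if_distrib[of "\<lambda>z. _ * z"] sum.delta' cong: if_cong)

lemma invertible_Pm: "a < d \<Longrightarrow> b < d \<Longrightarrow> invertible_over R d (Pm a b)"
  unfolding invertible_over_def
  apply (intro conjI exI[of _ "Pm a b"])
  apply (auto simp: mat_over_def Pm_def)[2]
  apply (simp_all add: Pm_left)
  apply (auto simp: Pm_def)
  done

definition Ecol :: "(nat \<Rightarrow> 'a) \<Rightarrow> nat \<Rightarrow> nat \<Rightarrow> 'a" where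
  "Ecol c = (\<lambda>i j. if i = j then 1 else if j = 0 then - c i else 0)"
definition Erow :: "(nat \<Rightarrow> 'a) \<Rightarrow> nat \<Rightarrow> nat \<Rightarrow> 'a" where
  "Erow c = (\<lambda>i j. if i = j then 1 else if i = 0 then - c j else 0)"

lemma sum_split0: "d > 0 \<Longrightarrow> (\<Sum>j<d. f j) = f 0 + (\<Sum>j<d - 1. f (Suc j))"
proof (cases d)
  case (Suc n) then show ?thesis using sum.lessThan_Suc_shift[of f n] by simp
qed simp

lemma Ecol_left: "0 < d \<Longrightarrow> i < d \<Longrightarrow>
   mat_mul (Ecol c) A d i k = (if i = 0 then A 0 k else A i k - c i * A 0 k)"
proof -
  assume d: "0 < d" and i: "i < d"
  have "mat_mul (Ecol c) A d i k = Ecol c i 0 * A 0 k + (\<Sum>j<d - 1. Ecol c i (Suc j) * A (Suc j) k)"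
    unfolding mat_mul_def by (rule sum_split0[OF d])
  also have "(\<Sum>j<d - 1. Ecol c i (Suc j) * A (Suc j) k) = (if i = 0 then 0 else A i k)"
  proof (cases i)
    case 0 then show ?thesis unfolding Ecol_def by simp
  next
    case (Suc i')
    then have "(\<Sum>j<d - 1. Ecol c i (Suc j) * A (Suc j) k) = (\<Sum>j<d - 1. if j = i' then A (Suc j) k else 0)"
      unfolding Ecol_def by (intro sum.cong) auto
    also have "\<dots> = A i k" using Suc i by (simp add: sum.delta)
    finally show ?thesis using Suc by simp
  qed
  finally show ?thesis unfolding Ecol_def by (auto simp: algebra_simps)
qed

lemma Erow_right: "0 < d \<Longrightarrow> k < d \<Longrightarrow>
   mat_mul A (Erow c) d i k = (if k = 0 then A i 0 else A i k - c k * A i 0)"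
proof -
  assume d: "0 < d" and k: "k < d"
  have "mat_mul A (Erow c) d i k = A i 0 * Erow c 0 k + (\<Sum>j<d - 1. A i (Suc j) * Erow c (Suc j) k)"
    unfolding mat_mul_def by (rule sum_split0[OF d])
  also have "(\<Sum>j<d - 1. A i (Suc j) * Erow c (Suc j) k) = (if k = 0 then 0 else A i k)"
  proof (cases k)
    case 0 then show ?thesis unfolding Erow_def by simp
  next
    case (Suc k')
    then have "(\<Sum>j<d - 1. A i (Suc j) * Erow c (Suc j) k) = (\<Sum>j<d - 1. if j = k' then A i (Suc j) else 0)"
      unfolding Erow_def by (intro sum.cong) auto
    also have "\<dots> = A i k" using Suc k by (simp add: sum.delta)
    finally show ?thesis using Suc by simp
  qed
  finally show ?thesis unfolding Erow_def by (auto simp: algebra_simps)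
qed

lemma mat_over_Ecol: "(\<forall>i. c i \<in> R) \<Longrightarrow> mat_over R d d (Ecol c)"
  unfolding mat_over_def Ecol_def by auto
lemma mat_over_Erow: "(\<forall>i. c i \<in> R) \<Longrightarrow> mat_over R d d (Erow c)"
  unfolding mat_over_def Erow_def by auto

lemma invertible_Ecol: "(\<forall>i. c i \<in> R) \<Longrightarrow> 0 < d \<Longrightarrow> invertible_over R d (Ecol c)"
  unfolding invertible_over_def
proof (intro conjI exI[of _ "Ecol (\<lambda>i. - c i)"])
  assume c: "\<forall>i. c i \<in> R" and d: "0 < d"
  show "mat_over R d d (Ecol c)" "mat_over R d d (Ecol (\<lambda>i. - c i))"
    using c by (auto intro!: mat_over_Ecol)
  show "\<forall>i<d. \<forall>j<d. mat_mul (Ecol c) (Ecol (\<lambda>i. - c i)) d i j = (if i = j then 1 else 0)"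
    using d by (auto simp: Ecol_left) (auto simp: Ecol_def)
  show "\<forall>i<d. \<forall>j<d. mat_mul (Ecol (\<lambda>i. - c i)) (Ecol c) d i j = (if i = j then 1 else 0)"
    using d by (auto simp: Ecol_left) (auto simp: Ecol_def)
qed

lemma invertible_Erow: "(\<forall>i. c i \<in> R) \<Longrightarrow> 0 < d \<Longrightarrow> invertible_over R d (Erow c)"
  unfolding invertible_over_def
proof (intro conjI exI[of _ "Erow (\<lambda>i. - c i)"])
  assume c: "\<forall>i. c i \<in> R" and d: "0 < d"
  show "mat_over R d d (Erow c)" "mat_over R d d (Erow (\<lambda>i. - c i))"
    using c by (auto intro!: mat_over_Erow)
  show "\<forall>i<d. \<forall>j<d. mat_mul (Erow c) (Erow (\<lambda>i. - c i)) d i j = (if i = j then 1 else 0)"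
    using d by (auto simp: Erow_right) (auto simp: Erow_def)
  show "\<forall>i<d. \<forall>j<d. mat_mul (Erow (\<lambda>i. - c i)) (Erow c) d i j = (if i = j then 1 else 0)"
    using d by (auto simp: Erow_right) (auto simp: Erow_def)
qed

definition ext1 :: "(nat \<Rightarrow> nat \<Rightarrow> 'a) \<Rightarrow> nat \<Rightarrow> nat \<Rightarrow> 'a" where
  "ext1 M = (\<lambda>i j. if i = 0 \<and> j = 0 then 1 else if i = 0 \<or> j = 0 then 0 else M (i - 1) (j - 1))"

lemma ext1_mul: "mat_mul (ext1 A) (ext1 B) (Suc p) = ext1 (mat_mul A B p)"
proof (intro ext)
  fix i k
  show "mat_mul (ext1 A) (ext1 B) (Suc p) i k = ext1 (mat_mul A B p) i k"
    unfolding mat_mul_def sum.lessThan_Suc_shift by (simp add: ext1_def)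
qed

lemma invertible_ext1:
  assumes P: "invertible_over R d P"
  shows "invertible_over R (Suc d) (ext1 P)"
proof -
  obtain P' where P': "mat_over R d d P'" "\<forall>i<d. \<forall>j<d. mat_mul P P' d i j = (if i = j then 1 else 0)"
    "\<forall>i<d. \<forall>j<d. mat_mul P' P d i j = (if i = j then 1 else 0)" and PR: "mat_over R d d P"
    using P unfolding invertible_over_def by blast
  show ?thesis unfolding invertible_over_def
  proof (intro conjI exI[of _ "ext1 P'"])
    show "mat_over R (Suc d) (Suc d) (ext1 P)" "mat_over R (Suc d) (Suc d) (ext1 P')"
      using PR P'(1) unfolding mat_over_def ext1_def by auto
    show "\<forall>i<Suc d. \<forall>j<Suc d. mat_mul (ext1 P) (ext1 P') (Suc d) i j = (if i = j then 1 else 0)"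
      unfolding ext1_mul using P'(2) by (auto simp: ext1_def)
    show "\<forall>i<Suc d. \<forall>j<Suc d. mat_mul (ext1 P') (ext1 P) (Suc d) i j = (if i = j then 1 else 0)"
      unfolding ext1_mul using P'(3) by (auto simp: ext1_def)
  qed
qed

lemma ext1_block:
  assumes B0: "\<And>k. 0 < k \<Longrightarrow> k < Suc d2 \<Longrightarrow> B 0 k = 0" and B1: "\<And>i. 0 < i \<Longrightarrow> i < Suc d1 \<Longrightarrow> B i 0 = 0"
    and i: "i < Suc d1" and k: "k < Suc d2"
  shows "mat_mul (mat_mul (ext1 P) B (Suc d1)) (ext1 Q) (Suc d2) i k =
     (if i = 0 \<and> k = 0 then B 0 0 else if i = 0 \<or> k = 0 then 0 else
        mat_mul (mat_mul P (\<lambda>i j. B (Suc i) (Suc j)) d1) Q d2 (i - 1) (k - 1))"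
proof -
  have L: "mat_mul (ext1 P) B (Suc d1) i' k' =
     (if i' = 0 then B 0 k' else mat_mul P (\<lambda>i j. B (Suc i) k') d1 (i' - 1) 0)" for i' k'
    unfolding mat_mul_def sum.lessThan_Suc_shift by (simp add: ext1_def)
  have M: "mat_mul (mat_mul (ext1 P) B (Suc d1)) (ext1 Q) (Suc d2) i k =
     mat_mul (ext1 P) B (Suc d1) i 0 * ext1 Q 0 k +
     (\<Sum>j<d2. mat_mul (ext1 P) B (Suc d1) i (Suc j) * ext1 Q (Suc j) k)"
    unfolding mat_mul_def[of _ "ext1 Q"] sum.lessThan_Suc_shift ..
  show ?thesis
  proof (cases "i = 0")
    case True
    then show ?thesis unfolding M L using B0 by (auto simp: ext1_def)
  next
    case False
    have z: "mat_mul P (\<lambda>i j. B (Suc i) 0) d1 (i - 1) 0 = 0"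
      unfolding mat_mul_def using B1 by (auto intro!: sum.neutral)
    show ?thesis unfolding M L using False z
      by (auto simp: ext1_def mat_mul_def)
  qed
qed


lemma smith_exists:
  "mat_over R d1 d2 A \<Longrightarrow> \<exists>P Q. invertible_over R d1 P \<and> invertible_over R d2 Q \<and>
     smith_form R d1 d2 (mat_mul (mat_mul P A d1) Q d2)"
proof (induction d1 arbitrary: d2 A)
  case 0
  then show ?case using invertible_idm by (auto simp: smith_form_def)
next
  case (Suc d1')
  show ?case
  proof (cases d2)
    case 0
    then show ?thesis using invertible_idm by (auto simp: smith_form_def)
  next
    case (Suc d2')
    let ?n1 = "Suc d1'" and ?n2 = "Suc d2'"
    have AR: "mat_over R ?n1 ?n2 A" using Suc.prems Suc by simp
    define E where "E = (\<lambda>(i, j). A i j) ` ({..<?n1} \<times> {..<?n2})"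
    have finE: "finite E" and neE: "E \<noteq> {}" unfolding E_def by auto
    have subE: "E \<subseteq> R" using AR unfolding E_def mat_over_def by auto
    obtain x where xE: "x \<in> E" and xdiv: "\<forall>y\<in>E. dvdR x y"
      using exists_min_div[OF finE neE subE] by blast
    obtain i0 j0 where ij0: "i0 < ?n1" "j0 < ?n2" "x = A i0 j0" using xE unfolding E_def by auto
    have xR: "x \<in> R" using xE subE by auto
    define A1 where "A1 = mat_mul (mat_mul (Pm 0 i0) A ?n1) (Pm 0 j0) ?n2"
    have A1v: "A1 i k = A (sw 0 i0 i) (sw 0 j0 k)" if "i < ?n1" "k < ?n2" for i k
      unfolding A1_def using that ij0 by (simp add: Pm_right Pm_left sw_lt)
    have A1_00: "A1 0 0 = x" using A1v[of 0 0] ij0 by (simp add: sw_def)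
    have dvd1: "dvdR x (A1 i k)" if "i < ?n1" "k < ?n2" for i k
      using A1v[OF that] xdiv that ij0 sw_lt[of 0 ?n1 i0 i] sw_lt[of 0 ?n2 j0 k] unfolding E_def by auto
    have A1R: "A1 i k \<in> R" if "i < ?n1" "k < ?n2" for i k
      using A1v[OF that] AR that ij0 sw_lt[of 0 ?n1 i0 i] sw_lt[of 0 ?n2 j0 k] unfolding mat_over_def by auto
    define c where "c i = (SOME z. z \<in> R \<and> (i < ?n1 \<longrightarrow> A1 i 0 = x * z))" for i
    define c' where "c' k = (SOME z. z \<in> R \<and> (k < ?n2 \<longrightarrow> A1 0 k = x * z))" for k
    have c: "c i \<in> R \<and> (i < ?n1 \<longrightarrow> A1 i 0 = x * c i)" for i
    proof -
      have "\<exists>z. z \<in> R \<and> (i < ?n1 \<longrightarrow> A1 i 0 = x * z)"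
      proof (cases "i < ?n1")
        case True then show ?thesis using dvd1[of i 0] unfolding dvdR_def by auto
      next
        case False then show ?thesis by auto
      qed
      then show ?thesis unfolding c_def by (rule someI_ex)
    qed
    have c': "c' k \<in> R \<and> (k < ?n2 \<longrightarrow> A1 0 k = x * c' k)" for k
    proof -
      have "\<exists>z. z \<in> R \<and> (k < ?n2 \<longrightarrow> A1 0 k = x * z)"
      proof (cases "k < ?n2")
        case True then show ?thesis using dvd1[of 0 k] unfolding dvdR_def by auto
      next
        case False then show ?thesis by auto
      qed
      then show ?thesis unfolding c'_def by (rule someI_ex)
    qed
    define X where "X = mat_mul (Ecol c) A1 ?n1"
    define A2 where "A2 = mat_mul X (Erow c') ?n2"
    have Xv: "X i k = (if i = 0 then A1 0 k else A1 i k - c i * A1 0 k)" if "i < ?n1" for i k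
      unfolding X_def using that by (simp add: Ecol_left)
    have A2v: "A2 i k = (if k = 0 then X i 0 else X i k - c' k * X i 0)" if "k < ?n2" for i k
      unfolding A2_def using that by (simp add: Erow_right)
    have A2_00: "A2 0 0 = x" using A2v[of 0 0] Xv[of 0 0] A1_00 by simp
    have A2_0k: "A2 0 k = 0" if "0 < k" "k < ?n2" for k
      using A2v[of k 0] Xv[of 0 k] Xv[of 0 0] A1_00 c'[of k] that by (simp add: mult.commute)
    have A2_i0: "A2 i 0 = 0" if "0 < i" "i < ?n1" for i
      using A2v[of 0 i] Xv[of i 0] A1_00 c[of i] that by (simp add: mult.commute)
    have dvdX: "dvdR x (X i k)" if "i < ?n1" "k < ?n2" for i k
      using Xv[of i k] that dvd1 c by (auto intro!: dvdR_diff dvdR_mult)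
    have dvd2: "dvdR x (A2 i k)" if "i < ?n1" "k < ?n2" for i k
      using A2v[of k i] that dvdX c' by (auto intro!: dvdR_diff dvdR_mult)
    have XR: "X i k \<in> R" if "i < ?n1" "k < ?n2" for i k
      using Xv[of i k] that A1R[of i k] A1R[of 0 k] c[of i] by (auto intro!: Rdiff Rmul)
    have A2R: "A2 i k \<in> R" if "i < ?n1" "k < ?n2" for i k
      using A2v[of k i] that XR[of i k] XR[of i 0] c'[of k] by (auto intro!: Rdiff Rmul)
    define B' where "B' = (\<lambda>i j. A2 (Suc i) (Suc j))"
    have B'R: "mat_over R d1' d2' B'" unfolding mat_over_def B'_def using A2R by auto
    obtain P' Q' where P': "invertible_over R d1' P'" and Q': "invertible_over R d2' Q'"
      and sm: "smith_form R d1' d2' (mat_mul (mat_mul P' B' d1') Q' d2')"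
      using Suc.IH[OF B'R] by blast
    define D' where "D' = mat_mul (mat_mul P' B' d1') Q' d2'"
    define P where "P = mat_mul (ext1 P') (mat_mul (Ecol c) (Pm 0 i0) ?n1) ?n1"
    define Q where "Q = mat_mul (mat_mul (Pm 0 j0) (Erow c') ?n2) (ext1 Q') ?n2"
    have Pinv: "invertible_over R ?n1 P" unfolding P_def
      using c ij0 by (intro invertible_mul invertible_ext1 P' invertible_Ecol invertible_Pm) auto
    have Qinv: "invertible_over R ?n2 Q" unfolding Q_def
      using c' ij0 by (intro invertible_mul invertible_ext1 Q' invertible_Erow invertible_Pm) auto
    have eqD: "mat_mul (mat_mul P A ?n1) Q ?n2 = mat_mul (mat_mul (ext1 P') A2 ?n1) (ext1 Q') ?n2"
      unfolding P_def Q_def A2_def X_def A1_def by (simp only: mat_mul_assoc)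
    have Dv: "mat_mul (mat_mul P A ?n1) Q ?n2 i k =
      (if i = 0 \<and> k = 0 then x else if i = 0 \<or> k = 0 then 0 else D' (i - 1) (k - 1))"
      if "i < ?n1" "k < ?n2" for i k
      unfolding eqD D'_def B'_def using ext1_block[of d2' A2 d1' i k P' Q'] A2_0k A2_i0 that A2_00 by simp
    have P'R: "mat_over R d1' d1' P'" and Q'R: "mat_over R d2' d2' Q'"
      using P' Q' unfolding invertible_over_def by auto
    have dvdD': "dvdR x (D' i k)" if "i < d1'" "k < d2'" for i k
      unfolding D'_def using that
      by (intro dvd_mat_right[OF Q'R] allI impI dvd_mat_left[OF P'R]) (auto simp: B'_def intro!: dvd2)
    have "smith_form R ?n1 ?n2 (mat_mul (mat_mul P A ?n1) Q ?n2)"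
      unfolding smith_form_def
    proof (intro conjI allI impI)
      fix i j assume ij: "i < ?n1" "j < ?n2" "i \<noteq> j"
      show "mat_mul (mat_mul P A ?n1) Q ?n2 i j = 0"
        using Dv[OF ij(1,2)] ij sm unfolding smith_form_def D'_def[symmetric] by auto
    next
      fix i assume i: "Suc i < min ?n1 ?n2"
      show "\<exists>c\<in>R. mat_mul (mat_mul P A ?n1) Q ?n2 (Suc i) (Suc i) = mat_mul (mat_mul P A ?n1) Q ?n2 i i * c"
      proof (cases i)
        case 0
        then have "dvdR x (D' 0 0)" using i by (intro dvdD') auto
        then show ?thesis using Dv[of 1 1] Dv[of 0 0] 0 i unfolding dvdR_def by auto
      next
        case (Suc i')
        then have "\<exists>c\<in>R. D' (Suc i') (Suc i') = D' i' i' * c" using sm i unfolding smith_form_def D'_def[symmetric] by auto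
        then show ?thesis using Dv[of "Suc i" "Suc i"] Dv[of i i] Suc i by auto
      qed
    qed
    then show ?thesis using Pinv Qinv Suc by blast
  qed
qed

end




context crx
begin

lemma coord_spec:
  assumes B: "R_basis R m B"
  shows "(\<forall>i<m. coord R m B x i \<in> R) \<and> (\<forall>i\<ge>m. coord R m B x i = 0) \<and> x = (\<Sum>i<m. coord R m B x i * B i)"
proof -
  have "\<exists>!c. (\<forall>i<m. c i \<in> R) \<and> (\<forall>i\<ge>m. c i = 0) \<and> x = (\<Sum>i<m. c i * B i)"
    using B unfolding R_basis_def by blast
  then show ?thesis unfolding coord_def by (rule theI')
qed

lemma coord_unique:
  assumes B: "R_basis R m B" and c: "\<forall>i<m. c i \<in> R" "\<forall>i\<ge>m. c i = 0" "x = (\<Sum>i<m. c i * B i)"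
  shows "coord R m B x = c"
proof -
  have ex1: "\<exists>!c. (\<forall>i<m. c i \<in> R) \<and> (\<forall>i\<ge>m. c i = 0) \<and> x = (\<Sum>i<m. c i * B i)"
    using B unfolding R_basis_def by blast
  show ?thesis using ex1 coord_spec[OF B, of x] c by blast
qed

lemma coord_lin:
  assumes B: "R_basis R m B" and rho: "\<forall>j<s. \<rho> j \<in> R"
  shows "coord R m B (\<Sum>j<s. \<rho> j * u j) = (\<lambda>i. \<Sum>j<s. \<rho> j * coord R m B (u j) i)"
proof (rule coord_unique[OF B])
  show "\<forall>i<m. (\<Sum>j<s. \<rho> j * coord R m B (u j) i) \<in> R"
    using coord_spec[OF B] rho by (auto intro!: Rsum)
  show "\<forall>i\<ge>m. (\<Sum>j<s. \<rho> j * coord R m B (u j) i) = 0"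
    using coord_spec[OF B] by auto
  have "(\<Sum>j<s. \<rho> j * u j) = (\<Sum>j<s. \<rho> j * (\<Sum>i<m. coord R m B (u j) i * B i))"
    using coord_spec[OF B] by (intro sum.cong) auto
  also have "\<dots> = (\<Sum>i<m. (\<Sum>j<s. \<rho> j * coord R m B (u j) i) * B i)"
    by (simp add: sum_distrib_left sum_distrib_right mult.assoc) (rule sum.swap)
  finally show "(\<Sum>j<s. \<rho> j * u j) = (\<Sum>i<m. (\<Sum>j<s. \<rho> j * coord R m B (u j) i) * B i)" .
qed

lemma coord_mul:
  assumes B: "R_basis R m B" and y: "y \<in> R"
  shows "coord R m B (y * v) = (\<lambda>i. y * coord R m B v i)"
proof (rule coord_unique[OF B])
  show "\<forall>i<m. y * coord R m B v i \<in> R" using coord_spec[OF B] y by auto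
  show "\<forall>i\<ge>m. y * coord R m B v i = 0" using coord_spec[OF B] by auto
  have "y * v = y * (\<Sum>i<m. coord R m B v i * B i)" using coord_spec[OF B] by metis
  then show "y * v = (\<Sum>i<m. y * coord R m B v i * B i)" by (simp add: sum_distrib_left mult.assoc)
qed

lemma coord_eq:
  assumes B: "R_basis R m B" and eq: "\<forall>i<m. coord R m B v i = coord R m B v' i"
  shows "v = v'"
proof -
  have "v = (\<Sum>i<m. coord R m B v i * B i)" using coord_spec[OF B] by metis
  also have "\<dots> = (\<Sum>i<m. coord R m B v' i * B i)" using eq by simp
  also have "\<dots> = v'" using coord_spec[OF B] by metis
  finally show ?thesis .
qed

definition SocM :: "(nat \<Rightarrow> 'a) \<Rightarrow> nat \<Rightarrow> 'a set" where
  "SocM u s = {v. (\<exists>\<rho>. (\<forall>j<s. \<rho> j \<in> R) \<and> v = (\<Sum>j<s. \<rho> j * u j)) \<and> (\<forall>y\<in>mm. y * v = 0)}"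

lemma snf_data:
  assumes "snf_rank_is R m s A r"
  obtains P Q P' Q' where "mat_over R m m P" "mat_over R m m P'"
    "\<forall>i<m. \<forall>j<m. mat_mul P' P m i j = (if i = j then 1 else 0)"
    "\<forall>i<m. \<forall>j<m. mat_mul P P' m i j = (if i = j then 1 else 0)"
    "mat_over R s s Q" "mat_over R s s Q'"
    "\<forall>i<s. \<forall>j<s. mat_mul Q Q' s i j = (if i = j then 1 else 0)"
    "\<forall>i<s. \<forall>j<s. mat_mul Q' Q s i j = (if i = j then 1 else 0)"
    "smith_form R m s (mat_mul (mat_mul P A m) Q s)"
    "r = card {i. i < min m s \<and> mat_mul (mat_mul P A m) Q s i i \<noteq> 0}"
  using assms unfolding snf_rank_is_def invertible_over_def by blast

lemma rank_soc:
  assumes B: "R_basis R m B" and sn: "snf_rank_is R m s (\<lambda>i j. coord R m B (u j) i) r"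
  shows "card (SocM u s) = card socR ^ r"
proof -
  define co where "co = coord R m B"
  define A where "A = (\<lambda>i j. co (u j) i)"
  obtain P Q P' Q' where PR: "mat_over R m m P" and P'R: "mat_over R m m P'"
    and P'P: "\<forall>i<m. \<forall>j<m. mat_mul P' P m i j = (if i = j then 1 else 0)"
    and PP': "\<forall>i<m. \<forall>j<m. mat_mul P P' m i j = (if i = j then 1 else 0)"
    and QR: "mat_over R s s Q" and Q'R: "mat_over R s s Q'"
    and QQ': "\<forall>i<s. \<forall>j<s. mat_mul Q Q' s i j = (if i = j then 1 else 0)"
    and Q'Q: "\<forall>i<s. \<forall>j<s. mat_mul Q' Q s i j = (if i = j then 1 else 0)"
    and sm: "smith_form R m s (mat_mul (mat_mul P A m) Q s)"
    and rdef: "r = card {i. i < min m s \<and> mat_mul (mat_mul P A m) Q s i i \<noteq> 0}"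
  proof (rule snf_data)
    show "snf_rank_is R m s A r" using sn unfolding A_def co_def .
  qed
  define D where "D = mat_mul (mat_mul P A m) Q s"
  define Z where "Z = {i. i < min m s \<and> D i i \<noteq> 0}"
  have rZ: "r = card Z" unfolding Z_def D_def rdef ..
  have AR: "mat_over R m s A" unfolding A_def co_def mat_over_def using coord_spec[OF B] by auto
  have DR: "mat_over R m s D" unfolding D_def by (intro mat_over_mul AR PR QR)
  have Doff: "D i l = 0" if "i < m" "l < s" "i \<noteq> l" for i l
    using sm that unfolding smith_form_def D_def by auto
  define w where "w v i = (\<Sum>k<m. P i k * co v k)" for v i
  have PA: "mat_mul P A m i j = (\<Sum>l<s. D i l * Q' l j)" if "i < m" "j < s" for i j
  proof -
    have "(\<Sum>l<s. D i l * Q' l j) = mat_mul D Q' s i j" unfolding mat_mul_def ..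
    also have "\<dots> = mat_mul (mat_mul P A m) (mat_mul Q Q' s) s i j" unfolding D_def by (simp add: mat_mul_assoc)
    also have "\<dots> = mat_mul (mat_mul P A m) idm s i j"
      by (rule mat_mul_cong) (auto simp: QQ' idm_def that)
    also have "\<dots> = mat_mul P A m i j" using that by (simp add: mat_mul_id_right)
    finally show ?thesis by simp
  qed
  have wlin: "w (\<Sum>j<s. \<rho> j * u j) i = (if i < s then D i i * (\<Sum>j<s. Q' i j * \<rho> j) else 0)"
    if rho: "\<forall>j<s. \<rho> j \<in> R" and i: "i < m" for \<rho> i
  proof -
    have "w (\<Sum>j<s. \<rho> j * u j) i = (\<Sum>k<m. P i k * (\<Sum>j<s. \<rho> j * A k j))"
      unfolding w_def co_def coord_lin[OF B rho] A_def ..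
    also have "\<dots> = (\<Sum>j<s. \<rho> j * mat_mul P A m i j)"
      unfolding mat_mul_def by (simp add: sum_distrib_left mult.left_commute) (rule sum.swap)
    also have "\<dots> = (\<Sum>j<s. \<rho> j * (\<Sum>l<s. D i l * Q' l j))"
      using PA i by simp
    also have "\<dots> = (\<Sum>l<s. D i l * (\<Sum>j<s. Q' l j * \<rho> j))"
      by (simp add: sum_distrib_left mult.left_commute mult.commute) (rule sum.swap)
    also have "\<dots> = (\<Sum>l<s. if l = i then D i i * (\<Sum>j<s. Q' i j * \<rho> j) else 0)"
      using Doff i by (intro sum.cong) auto
    also have "\<dots> = (if i < s then D i i * (\<Sum>j<s. Q' i j * \<rho> j) else 0)"
      by (simp add: sum.delta')
    finally show ?thesis .
  qed
  have winj: "v = v'" if "\<forall>i<m. w v i = w v' i" for v v'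
  proof (rule coord_eq[OF B], intro allI impI)
    fix k assume k: "k < m"
    have inv: "co x k = (\<Sum>i<m. P' k i * w x i)" for x
    proof -
      have "(\<Sum>i<m. P' k i * w x i) = (\<Sum>l<m. mat_mul P' P m k l * co x l)"
        unfolding w_def mat_mul_def by (simp add: sum_distrib_left sum_distrib_right mult.assoc) (rule sum.swap)
      also have "\<dots> = (\<Sum>l<m. if l = k then co x l else 0)"
        using P'P k by (intro sum.cong) auto
      also have "\<dots> = co x k" using k by (simp add: sum.delta')
      finally show ?thesis by simp
    qed
    show "coord R m B v k = coord R m B v' k"
      using inv[of v] inv[of v'] that unfolding co_def by simp
  qed
  have wmul: "w (y * v) i = y * w v i" if "y \<in> R" for y v i
    unfolding w_def co_def coord_mul[OF B that] by (simp add: sum_distrib_left mult.left_commute)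
  have w0: "w 0 i = 0" for i
    using wmul[of 0 0 i] by simp
  define Phi where "Phi v = restrict (w v) Z" for v
  have bij: "bij_betw Phi (SocM u s) (PiE Z (\<lambda>_. socR))"
  proof (rule bij_betw_imageI)
    show "inj_on Phi (SocM u s)"
    proof (rule inj_onI)
      fix v v' assume v: "v \<in> SocM u s" and v': "v' \<in> SocM u s" and eq: "Phi v = Phi v'"
      obtain \<rho> where rho: "\<forall>j<s. \<rho> j \<in> R" "v = (\<Sum>j<s. \<rho> j * u j)" using v unfolding SocM_def by auto
      obtain \<rho>' where rho': "\<forall>j<s. \<rho>' j \<in> R" "v' = (\<Sum>j<s. \<rho>' j * u j)" using v' unfolding SocM_def by auto
      have "w v i = w v' i" if i: "i < m" for i
      proof (cases "i \<in> Z")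
        case True then show ?thesis using eq unfolding Phi_def by (metis restrict_apply')
      next
        case False
        then have "w v i = 0" "w v' i = 0" using wlin[OF rho(1) i] wlin[OF rho'(1) i] i rho(2) rho'(2)
          unfolding Z_def by auto
        then show ?thesis by simp
      qed
      then show "v = v'" using winj by blast
    qed
  next
    show "Phi ` SocM u s = PiE Z (\<lambda>_. socR)"
    proof (intro equalityI subsetI)
      fix z assume "z \<in> Phi ` SocM u s"
      then obtain v where v: "v \<in> SocM u s" and z: "z = Phi v" by auto
      obtain \<rho> where rho: "\<forall>j<s. \<rho> j \<in> R" "v = (\<Sum>j<s. \<rho> j * u j)" and ann: "\<forall>y\<in>mm. y * v = 0"
        using v unfolding SocM_def by auto
      show "z \<in> PiE Z (\<lambda>_. socR)" unfolding z Phi_def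
      proof (rule restrict_PiE_iff[THEN iffD2], intro ballI)
        fix i assume iZ: "i \<in> Z"
        then have i: "i < m" "i < s" unfolding Z_def by auto
        have "w v i \<in> R" using wlin[OF rho(1) i(1)] rho(2) i DR Q'R rho(1)
          unfolding mat_over_def by (auto intro!: Rmul Rsum)
        moreover have "y * w v i = 0" if "y \<in> mm" for y
          using wmul[of y v i] ann that w0 mm_R by auto
        ultimately show "w v i \<in> socR" unfolding socR_def by auto
      qed
    next
      fix z assume z: "z \<in> PiE Z (\<lambda>_. socR)"
      have "\<exists>t. t \<in> R \<and> (i \<in> Z \<longrightarrow> z i = D i i * t)" for i
      proof (cases "i \<in> Z")
        case True
        then have "D i i \<in> R" "D i i \<noteq> 0" "z i \<in> socR" using DR z unfolding Z_def mat_over_def by auto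
        then show ?thesis using socR_sub by blast
      qed auto
      then obtain \<tau> where tau: "\<And>i. \<tau> i \<in> R" "\<And>i. i \<in> Z \<Longrightarrow> z i = D i i * \<tau> i" by metis
      define \<rho> where "\<rho> j = (\<Sum>l<s. Q j l * \<tau> l)" for j
      have rhoR: "\<forall>j<s. \<rho> j \<in> R" unfolding \<rho>_def using QR tau(1) unfolding mat_over_def by (auto intro!: Rsum Rmul)
      have Q'rho: "(\<Sum>j<s. Q' i j * \<rho> j) = \<tau> i" if "i < s" for i
      proof -
        have "(\<Sum>j<s. Q' i j * \<rho> j) = (\<Sum>l<s. mat_mul Q' Q s i l * \<tau> l)"
          unfolding \<rho>_def mat_mul_def by (simp add: sum_distrib_left sum_distrib_right mult.assoc) (rule sum.swap)
        also have "\<dots> = (\<Sum>l<s. if l = i then \<tau> l else 0)" using Q'Q that by (intro sum.cong) auto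
        finally show ?thesis using that by (simp add: sum.delta')
      qed
      define v where "v = (\<Sum>j<s. \<rho> j * u j)"
      have wv: "w v i = (if i \<in> Z then z i else 0)" if "i < m" for i
      proof (cases "i < s")
        case True
        then have "w v i = D i i * \<tau> i" unfolding v_def using wlin[OF rhoR that] Q'rho by simp
        then show ?thesis using tau(2) that True unfolding Z_def by auto
      next
        case False then show ?thesis unfolding v_def using wlin[OF rhoR that] Z_def by auto
      qed
      have vS: "v \<in> SocM u s"
        unfolding SocM_def
      proof (intro CollectI conjI ballI)
        show "\<exists>\<rho>. (\<forall>j<s. \<rho> j \<in> R) \<and> v = (\<Sum>j<s. \<rho> j * u j)" using rhoR v_def by blast
        fix y assume y: "y \<in> mm"
        have "w (y * v) i = w 0 i" if "i < m" for i
        proof -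
          have "w (y * v) i = y * w v i" using wmul mm_R y by blast
          also have "\<dots> = 0" using wv[OF that] y z unfolding socR_def by (auto simp: PiE_iff)
          finally show ?thesis using w0 by simp
        qed
        then show "y * v = 0" using winj by blast
      qed
      have "Phi v = z"
      proof (rule ext)
        fix i show "Phi v i = z i"
        proof (cases "i \<in> Z")
          case True then show ?thesis unfolding Phi_def using wv[of i] unfolding Z_def by auto
        next
          case False then show ?thesis unfolding Phi_def using z by (auto simp: PiE_iff extensional_def)
        qed
      qed
      then show "z \<in> Phi ` SocM u s" using vS by blast
    qed
  qed
  have "card (SocM u s) = card (PiE Z (\<lambda>_. socR))" using bij by (rule bij_betw_same_card)
  also have "\<dots> = card socR ^ card Z" by (simp add: card_PiE Z_def)
  finally show ?thesis using rZ by simp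
qed


lemma rk_spec:
  assumes B0: "R_basis R m B0"
  shows "\<exists>B. R_basis R m B \<and> snf_rank_is R m s (\<lambda>i j. coord R m B (u j) i) (rk R m s u)"
proof -
  define A0 where "A0 = (\<lambda>i j. coord R m B0 (u j) i)"
  have "mat_over R m s A0" unfolding A0_def mat_over_def using coord_spec[OF B0] by auto
  then obtain P Q where PQ: "invertible_over R m P" "invertible_over R s Q"
    "smith_form R m s (mat_mul (mat_mul P A0 m) Q s)" using smith_exists by blast
  define r0 where "r0 = card {i. i < min m s \<and> mat_mul (mat_mul P A0 m) Q s i i \<noteq> 0}"
  have ex: "\<exists>B. R_basis R m B \<and> snf_rank_is R m s (\<lambda>i j. coord R m B (u j) i) r0"
    using B0 PQ unfolding snf_rank_is_def r0_def A0_def by blast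
  have uniq: "r = r0" if hr: "\<exists>B. R_basis R m B \<and> snf_rank_is R m s (\<lambda>i j. coord R m B (u j) i) r" for r
  proof -
    obtain B where "R_basis R m B" "snf_rank_is R m s (\<lambda>i j. coord R m B (u j) i) r" using hr by blast
    then have "card (SocM u s) = card socR ^ r" by (rule rank_soc)
    moreover obtain B' where "R_basis R m B'" "snf_rank_is R m s (\<lambda>i j. coord R m B' (u j) i) r0" using ex by blast
    then have "card (SocM u s) = card socR ^ r0" by (rule rank_soc)
    ultimately have "card socR ^ r = card socR ^ r0" by simp
    then show ?thesis using card_socR by simp
  qed
  have "rk R m s u = r0" unfolding rk_def
    by (rule the1_equality) (use ex uniq in blast)+
  then show ?thesis using ex by simp
qed

lemma coord_zero: "R_basis R m B \<Longrightarrow> coord R m B 0 = (\<lambda>i. 0)"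
  by (rule coord_unique) auto

lemma gens:
  assumes B: "R_basis R m B" and sn: "snf_rank_is R m s (\<lambda>i j. coord R m B (u j) i) r"
  shows "\<exists>g Q'. mat_over R s s Q' \<and> card {j. j < s \<and> g j \<noteq> 0} \<le> r \<and>
     (\<forall>k<s. u k = (\<Sum>j<s. Q' j k * g j))"
proof -
  define co where "co = coord R m B"
  define A where "A = (\<lambda>i j. co (u j) i)"
  obtain P Q P' Q' where PR: "mat_over R m m P" and P'R: "mat_over R m m P'"
    and P'P: "\<forall>i<m. \<forall>j<m. mat_mul P' P m i j = (if i = j then 1 else 0)"
    and PP': "\<forall>i<m. \<forall>j<m. mat_mul P P' m i j = (if i = j then 1 else 0)"
    and QR: "mat_over R s s Q" and Q'R: "mat_over R s s Q'"
    and QQ': "\<forall>i<s. \<forall>j<s. mat_mul Q Q' s i j = (if i = j then 1 else 0)"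
    and Q'Q: "\<forall>i<s. \<forall>j<s. mat_mul Q' Q s i j = (if i = j then 1 else 0)"
    and sm: "smith_form R m s (mat_mul (mat_mul P A m) Q s)"
    and rdef: "r = card {i. i < min m s \<and> mat_mul (mat_mul P A m) Q s i i \<noteq> 0}"
  proof (rule snf_data)
    show "snf_rank_is R m s A r" using sn unfolding A_def co_def .
  qed
  define D where "D = mat_mul (mat_mul P A m) Q s"
  define Z where "Z = {i. i < min m s \<and> D i i \<noteq> 0}"
  have rZ: "r = card Z" unfolding Z_def D_def rdef ..
  have Doff: "D i l = 0" if "i < m" "l < s" "i \<noteq> l" for i l
    using sm that unfolding smith_form_def D_def by auto
  define g where "g j = (\<Sum>k<s. Q k j * u k)" for j
  have rep: "u k = (\<Sum>j<s. Q' j k * g j)" if k: "k < s" for k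
  proof -
    have "(\<Sum>j<s. Q' j k * g j) = (\<Sum>k'<s. mat_mul Q Q' s k' k * u k')"
      unfolding g_def mat_mul_def by (simp add: sum_distrib_left sum_distrib_right mult.assoc mult.left_commute) (rule sum.swap)
    also have "\<dots> = (\<Sum>k'<s. if k' = k then u k' else 0)" using QQ' k by (intro sum.cong) auto
    finally show ?thesis using k by (simp add: sum.delta')
  qed
  have gz: "g j = 0" if j: "j < s" "j \<notin> Z" for j
  proof -
    have QjR: "\<forall>k<s. Q k j \<in> R" using QR j unfolding mat_over_def by auto
    have cg: "co (g j) i = mat_mul A Q s i j" for i
      unfolding g_def co_def coord_lin[OF B QjR] A_def mat_mul_def co_def by (simp add: mult.commute)
    have "co (g j) i = 0" if i: "i < m" for i
    proof -
      have "mat_mul A Q s i j = mat_mul idm (mat_mul A Q s) m i j" using i by (simp add: mat_mul_id_left)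
      also have "\<dots> = mat_mul (mat_mul P' P m) (mat_mul A Q s) m i j"
        by (rule mat_mul_cong) (auto simp: P'P i idm_def)
      also have "\<dots> = mat_mul P' D m i j" unfolding D_def by (simp add: mat_mul_assoc)
      also have "\<dots> = (\<Sum>l<m. if l = j then P' i j * D j j else 0)"
        unfolding mat_mul_def using Doff j(1) by (intro sum.cong) auto
      also have "\<dots> = 0" using j unfolding Z_def by (auto simp: sum.delta')
      finally show ?thesis using cg by simp
    qed
    then show ?thesis using coord_eq[OF B, of "g j" 0] coord_zero[OF B] unfolding co_def by auto
  qed
  have "{j. j < s \<and> g j \<noteq> 0} \<subseteq> Z" using gz by blast
  then have "card {j. j < s \<and> g j \<noteq> 0} \<le> card Z" by (intro card_mono) (auto simp: Z_def)
  then show ?thesis using rZ rep Q'R by blast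
qed

end




context gx
begin

lemma coeff_skew_aux:
  fixes c :: "nat \<Rightarrow> nat \<Rightarrow> 'a"
  assumes z1: "\<And>i j. i > N0 \<Longrightarrow> c i j = 0" and z2: "\<And>i j. j > M0 \<Longrightarrow> c i j = 0"
  shows "(\<Sum>i\<le>N0. \<Sum>j\<le>M0. if i + j = k then c i j else 0) = (\<Sum>i\<le>k. c i (k - i))"
proof -
  define N where "N = max N0 k"
  define M where "M = max M0 k"
  have zz: "(\<Sum>j\<le>M0. if i + j = k then c i j else 0) = 0" if "i > N0" for i
    using z1[OF that] by (intro sum.neutral) auto
  have "(\<Sum>i\<le>N0. \<Sum>j\<le>M0. if i + j = k then c i j else 0) = (\<Sum>i\<le>N. \<Sum>j\<le>M0. if i + j = k then c i j else 0)"
    unfolding N_def by (rule sum.mono_neutral_left) (auto simp: zz)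
  also have "\<dots> = (\<Sum>i\<le>N. \<Sum>j\<le>M. if i + j = k then c i j else 0)"
    unfolding M_def by (intro sum.cong refl sum.mono_neutral_left) (auto simp: z2)
  also have "\<dots> = (\<Sum>i\<le>N. if i \<le> k then c i (k - i) else 0)"
  proof (rule sum.cong[OF refl])
    fix i assume i: "i \<in> {..N}"
    have "(\<Sum>j\<le>M. if i + j = k then c i j else 0) = (\<Sum>j\<le>M. if j = k - i then (if i \<le> k then c i j else 0) else 0)"
      by (intro sum.cong) auto
    also have "\<dots> = (if i \<le> k then c i (k - i) else 0)" unfolding M_def by (simp add: sum.delta) linarith
    finally show "(\<Sum>j\<le>M. if i + j = k then c i j else 0) = (if i \<le> k then c i (k - i) else 0)" .
  qed
  also have "\<dots> = (\<Sum>i\<in>{..N} \<inter> {..k}. c i (k - i))" by (subst sum.inter_restrict) auto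
  also have "{..N} \<inter> {..k} = {..k}" unfolding N_def by auto
  finally show ?thesis .
qed

lemma coeff_skew: "coeff (skew_mult \<sigma> p q) k = (\<Sum>i\<le>k. coeff p i * (\<sigma> ^^ i) (coeff q (k - i)))"
proof -
  have "coeff (skew_mult \<sigma> p q) k = (\<Sum>i\<le>degree p. \<Sum>j\<le>degree q. if i + j = k then coeff p i * (\<sigma> ^^ i) (coeff q j) else 0)"
    unfolding skew_mult_def by (simp add: coeff_sum coeff_monom)
  also have "\<dots> = (\<Sum>i\<le>k. coeff p i * (\<sigma> ^^ i) (coeff q (k - i)))"
    by (rule coeff_skew_aux) (auto simp: coeff_eq_0 sigp_zero)
  finally show ?thesis .
qed

lemma skew_deg: "degree (skew_mult \<sigma> p q) \<le> degree p + degree q"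
proof (rule degree_le, intro allI impI)
  fix k assume k: "k > degree p + degree q"
  show "coeff (skew_mult \<sigma> p q) k = 0" unfolding coeff_skew
  proof (rule sum.neutral, intro ballI)
    fix i assume "i \<in> {..k}"
    then show "coeff p i * (\<sigma> ^^ i) (coeff q (k - i)) = 0"
      using k by (cases "i \<le> degree p") (auto simp: coeff_eq_0 sigp_zero)
  qed
qed

lemma coeff_skew_top: "coeff (skew_mult \<sigma> p q) (degree p + degree q) = coeff p (degree p) * (\<sigma> ^^ degree p) (coeff q (degree q))"
proof -
  have "coeff (skew_mult \<sigma> p q) (degree p + degree q) =
     (\<Sum>i\<le>degree p + degree q. if i = degree p then coeff p i * (\<sigma> ^^ i) (coeff q (degree p + degree q - i)) else 0)"
    unfolding coeff_skew
  proof (intro sum.cong refl)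
    fix i assume "i \<in> {..degree p + degree q}"
    show "coeff p i * (\<sigma> ^^ i) (coeff q (degree p + degree q - i)) =
      (if i = degree p then coeff p i * (\<sigma> ^^ i) (coeff q (degree p + degree q - i)) else 0)"
      by (cases "i < degree p") (auto simp: coeff_eq_0 sigp_zero)
  qed
  then show ?thesis by (simp add: sum.delta)
qed

lemma skewX: "coeff (skew_mult \<sigma> Q [:- b, 1:]) k =
   (if k = 0 then - coeff Q 0 * b else coeff Q (k - 1) - coeff Q k * (\<sigma> ^^ k) b)"
proof (cases k)
  case 0 then show ?thesis by (simp add: coeff_skew)
next
  case (Suc k')
  have "coeff (skew_mult \<sigma> Q [:- b, 1:]) k = (\<Sum>i\<le>k. if i = k' then coeff Q i else if i = k then - coeff Q k * (\<sigma> ^^ k) b else 0)"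
    unfolding coeff_skew
  proof (intro sum.cong refl)
    fix i assume "i \<in> {..k}"
    then have "i \<le> k" by simp
    then consider "i = k'" | "i = k" | "i < k'" using Suc by linarith
    then show "coeff Q i * (\<sigma> ^^ i) (coeff [:- b, 1:] (k - i)) = (if i = k' then coeff Q i else if i = k then - coeff Q k * (\<sigma> ^^ k) b else 0)"
    proof cases
      case 1 then show ?thesis using Suc by (simp add: sigp_one)
    next
      case 2 then show ?thesis using Suc by (simp add: sigp_neg sig_neg)
    next
      case 3 then have "k - i \<ge> 2" using Suc by linarith
      then have "coeff [:- b, 1:] (k - i) = 0" by (simp add: coeff_eq_0)
      then show ?thesis using 3 Suc by (simp add: sigp_zero)
    qed
  qed
  also have "\<dots> = (\<Sum>i\<le>k. (if i = k' then coeff Q i else 0) + (if i = k then - coeff Q k * (\<sigma> ^^ k) b else 0))"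
    using Suc by (intro sum.cong) auto
  also have "\<dots> = coeff Q k' - coeff Q k * (\<sigma> ^^ k) b"
    unfolding sum.distrib using Suc by (simp only: sum.delta finite_atMost) simp
  finally show ?thesis using Suc by simp
qed


lemma eval_unique:
  assumes eq: "skew_mult \<sigma> Q1 [:- b, 1:] + [:c1:] = skew_mult \<sigma> Q2 [:- b, 1:] + [:c2:]"
  shows "c1 = c2"
proof -
  have ck: "coeff Q1 (k - 1) - coeff Q1 k * (\<sigma> ^^ k) b = coeff Q2 (k - 1) - coeff Q2 k * (\<sigma> ^^ k) b"
    if "k > 0" for k
    using arg_cong[OF eq, of "\<lambda>p. coeff p k"] that by (simp add: skewX coeff_pCons split: nat.splits)
  define N where "N = Suc (max (degree Q1) (degree Q2))"
  have "coeff Q1 (N - d) = coeff Q2 (N - d)" for d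
  proof (induction d)
    case 0 then show ?case unfolding N_def by (simp add: coeff_eq_0)
  next
    case (Suc d)
    show ?case
    proof (cases "Suc d \<le> N")
      case True
      then have k: "N - d = Suc (N - Suc d)" by simp
      have "coeff Q1 (N - Suc d) - coeff Q1 (N - d) * (\<sigma> ^^ (N - d)) b =
            coeff Q2 (N - Suc d) - coeff Q2 (N - d) * (\<sigma> ^^ (N - d)) b"
        using ck[of "N - d"] k by simp
      then show ?thesis using Suc.IH by simp
    next
      case False then have "N - Suc d = N - d" by simp
      then show ?thesis using Suc.IH by simp
    qed
  qed
  then have "coeff Q1 0 = coeff Q2 0" by (metis diff_self_eq_0)
  moreover have "- coeff Q1 0 * b + c1 = - coeff Q2 0 * b + c2"
    using arg_cong[OF eq, of "\<lambda>p. coeff p 0"] by (simp add: skewX)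
  ultimately show ?thesis by simp
qed

lemma Nrm_0[simp]: "Nrm \<sigma> 0 b = 1" unfolding Nrm_def by simp

lemma Nrm_Suc: "Nrm \<sigma> (Suc i) b = Nrm \<sigma> i b * (\<sigma> ^^ i) b"
  unfolding Nrm_def by simp

lemma Nrm_shift: "i > 0 \<Longrightarrow> Nrm \<sigma> i b = b * (\<Prod>l\<in>{Suc 0..<i}. (\<sigma> ^^ l) b)"
  unfolding Nrm_def lessThan_atLeast0 by (subst prod.atLeast_Suc_lessThan) auto

lemma eval_exists:
  "\<exists>Q. P = skew_mult \<sigma> Q [:- b, 1:] + [:(\<Sum>i\<le>degree P. coeff P i * Nrm \<sigma> i b):]"
proof -
  define dP where "dP = degree P"
  define Qc where "Qc j = (\<Sum>i\<in>{Suc j..dP}. coeff P i * (\<Prod>l\<in>{Suc j..<i}. (\<sigma> ^^ l) b))" for j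
  define Q where "Q = (\<Sum>j<dP. monom (Qc j) j)"
  have cQ: "coeff Q j = Qc j" for j
    unfolding Q_def coeff_sum_monom Qc_def by auto
  define c where "c = (\<Sum>i\<le>dP. coeff P i * Nrm \<sigma> i b)"
  have "P = skew_mult \<sigma> Q [:- b, 1:] + [:c:]"
  proof (rule poly_eqI)
    fix k
    show "coeff P k = coeff (skew_mult \<sigma> Q [:- b, 1:] + [:c:]) k"
    proof (cases k)
      case 0
      have "Qc 0 * b = (\<Sum>i\<in>{Suc 0..dP}. coeff P i * Nrm \<sigma> i b)"
        unfolding Qc_def sum_distrib_right
        by (intro sum.cong refl) (simp add: Nrm_shift mult_ac)
      moreover have "c = coeff P 0 + (\<Sum>i\<in>{Suc 0..dP}. coeff P i * Nrm \<sigma> i b)"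
        unfolding c_def atMost_atLeast0 by (subst sum.atLeast_Suc_atMost) auto
      ultimately show ?thesis using 0 by (simp add: skewX cQ)
    next
      case (Suc k')
      show ?thesis
      proof (cases "k \<le> dP")
        case True
        have "Qc k' = coeff P k + (\<Sum>i\<in>{Suc k..dP}. coeff P i * (\<Prod>l\<in>{k..<i}. (\<sigma> ^^ l) b))"
          unfolding Qc_def Suc[symmetric] using True by (subst sum.atLeast_Suc_atMost) auto
        also have "(\<Sum>i\<in>{Suc k..dP}. coeff P i * (\<Prod>l\<in>{k..<i}. (\<sigma> ^^ l) b)) = Qc k * (\<sigma> ^^ k) b"
          unfolding Qc_def sum_distrib_right
          by (intro sum.cong refl) (simp add: prod.atLeast_Suc_lessThan mult_ac)
        finally show ?thesis using Suc by (simp add: skewX cQ)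
      next
        case False
        then have "Qc k' = 0" "Qc k = 0" "coeff P k = 0" unfolding Qc_def dP_def using Suc
          by (auto simp: coeff_eq_0)
        then show ?thesis using Suc by (simp add: skewX cQ)
      qed
    qed
  qed
  then show ?thesis unfolding c_def dP_def by blast
qed

lemma skew_eval_formula: "skew_eval \<sigma> P b = (\<Sum>i\<le>degree P. coeff P i * Nrm \<sigma> i b)"
  unfolding skew_eval_def
  by (rule the_equality) (use eval_exists eval_unique in blast)+

lemma skew_eval_bound: "degree P < N \<Longrightarrow> skew_eval \<sigma> P b = (\<Sum>i<N. coeff P i * Nrm \<sigma> i b)"
  unfolding skew_eval_formula by (intro sum.mono_neutral_left) (auto simp: coeff_eq_0)


lemma Nrm_add: "Nrm \<sigma> (i + j) b = (\<sigma> ^^ i) (Nrm \<sigma> j b) * Nrm \<sigma> i b"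
proof (induction j)
  case 0 then show ?case by (simp add: sigp_one)
next
  case (Suc j)
  have "Nrm \<sigma> (i + Suc j) b = Nrm \<sigma> (i + j) b * (\<sigma> ^^ (i + j)) b"
    using Nrm_Suc[of "i + j" b] by simp
  also have "\<dots> = (\<sigma> ^^ i) (Nrm \<sigma> j b) * Nrm \<sigma> i b * (\<sigma> ^^ i) ((\<sigma> ^^ j) b)"
    using Suc by (simp add: funpow_add)
  also have "\<dots> = (\<sigma> ^^ i) (Nrm \<sigma> (Suc j) b) * Nrm \<sigma> i b"
    by (simp add: Nrm_Suc sigp_mult mult_ac)
  finally show ?case .
qed

lemma eval_mult: "skew_eval \<sigma> (skew_mult \<sigma> L P) b =
   (\<Sum>s\<le>degree L. coeff L s * (\<sigma> ^^ s) (skew_eval \<sigma> P b) * Nrm \<sigma> s b)"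
proof -
  define N where "N = Suc (degree L + degree P)"
  define g where "g i j = coeff L i * (\<sigma> ^^ i) (coeff P j) * Nrm \<sigma> (i + j) b" for i j
  have "skew_eval \<sigma> (skew_mult \<sigma> L P) b = (\<Sum>k<N. coeff (skew_mult \<sigma> L P) k * Nrm \<sigma> k b)"
    using skew_deg[of L P] unfolding N_def by (intro skew_eval_bound) auto
  also have "\<dots> = (\<Sum>k<N. \<Sum>i\<le>k. g i (k - i))"
    unfolding coeff_skew sum_distrib_right g_def by (intro sum.cong refl) auto
  also have "\<dots> = (\<Sum>(i, j)\<in>{(i, j). i + j < N}. g i j)" by (rule sum.triangle_reindex[symmetric])
  also have "{(i, j). i + j < N} = Sigma {..<N} (\<lambda>i. {..<N - i})" by auto
  also have "(\<Sum>(i, j)\<in>Sigma {..<N} (\<lambda>i. {..<N - i}). g i j) = (\<Sum>i<N. \<Sum>j<N - i. g i j)"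
    by (rule sum.Sigma[symmetric]) auto
  also have "\<dots> = (\<Sum>i<N. coeff L i * (\<sigma> ^^ i) (skew_eval \<sigma> P b) * Nrm \<sigma> i b)"
  proof (intro sum.cong refl)
    fix i assume "i \<in> {..<N}"
    show "(\<Sum>j<N - i. g i j) = coeff L i * (\<sigma> ^^ i) (skew_eval \<sigma> P b) * Nrm \<sigma> i b"
    proof (cases "i \<le> degree L")
      case True
      then have "degree P < N - i" unfolding N_def by linarith
      then have ev: "skew_eval \<sigma> P b = (\<Sum>j<N - i. coeff P j * Nrm \<sigma> j b)" by (rule skew_eval_bound)
      show ?thesis unfolding ev g_def Nrm_add sigp_sum sigp_mult
        by (simp add: sum_distrib_left sum_distrib_right mult_ac)
    next
      case False then show ?thesis unfolding g_def by (simp add: coeff_eq_0)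
    qed
  qed
  also have "\<dots> = (\<Sum>s\<le>degree L. coeff L s * (\<sigma> ^^ s) (skew_eval \<sigma> P b) * Nrm \<sigma> s b)"
    unfolding N_def by (intro sum.mono_neutral_right) (auto simp: coeff_eq_0)
  finally show ?thesis .
qed

lemma Nrm_conj:
  assumes u: "unitS \<beta>"
  shows "Nrm \<sigma> s (\<sigma> \<beta> * a * sinv \<beta>) = (\<sigma> ^^ s) \<beta> * Nrm \<sigma> s a * sinv \<beta>"
proof (induction s)
  case 0 then show ?case using sinv[OF u] by simp
next
  case (Suc s)
  have su: "(\<sigma> ^^ s) (sinv \<beta>) = sinv ((\<sigma> ^^ s) \<beta>)" and us: "unitS ((\<sigma> ^^ s) \<beta>)"
    using sigp_unit[OF u] by auto
  have "Nrm \<sigma> (Suc s) (\<sigma> \<beta> * a * sinv \<beta>) =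
     (\<sigma> ^^ s) \<beta> * Nrm \<sigma> s a * sinv \<beta> * ((\<sigma> ^^ Suc s) \<beta> * (\<sigma> ^^ s) a * sinv ((\<sigma> ^^ s) \<beta>))"
    unfolding Nrm_Suc Suc sigp_mult su by (simp add: funpow_Suc_right del: funpow.simps)
  also have "\<dots> = ((\<sigma> ^^ s) \<beta> * sinv ((\<sigma> ^^ s) \<beta>)) * ((\<sigma> ^^ Suc s) \<beta> * (Nrm \<sigma> s a * (\<sigma> ^^ s) a) * sinv \<beta>)"
    by (simp add: mult_ac)
  also have "\<dots> = (\<sigma> ^^ Suc s) \<beta> * Nrm \<sigma> (Suc s) a * sinv \<beta>"
    using sinv[OF us] by (simp add: Nrm_Suc mult_ac)
  finally show ?case .
qed

definition Phi :: "'a \<Rightarrow> 'a poly \<Rightarrow> 'a \<Rightarrow> 'a" where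
  "Phi a L y = (\<Sum>s\<le>degree L. coeff L s * Dop \<sigma> s a y)"

lemma Phi_bound: "degree L < N \<Longrightarrow> Phi a L y = (\<Sum>s<N. coeff L s * Dop \<sigma> s a y)"
  unfolding Phi_def by (intro sum.mono_neutral_left) (auto simp: coeff_eq_0)

lemma eval_conj:
  assumes u: "unitS \<beta>"
  shows "(\<Sum>s\<le>degree L. coeff L s * (\<sigma> ^^ s) z * Nrm \<sigma> s (\<sigma> \<beta> * a * sinv \<beta>)) = Phi a L (z * \<beta>) * sinv \<beta>"
  unfolding Phi_def Dop_def Nrm_conj[OF u] sum_distrib_right sigp_mult by (simp add: mult_ac)

lemma eval_diff:
  assumes u: "unitS \<beta>" and b: "b = \<sigma> \<beta> * a * sinv \<beta>"
  shows "skew_eval \<sigma> (skew_mult \<sigma> L P) b - skew_eval \<sigma> (skew_mult \<sigma> L P') b =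
     Phi a L ((skew_eval \<sigma> P b - skew_eval \<sigma> P' b) * \<beta>) * sinv \<beta>"
  unfolding eval_mult eval_conj[OF u, symmetric] b[symmetric] sum_subtractf[symmetric]
  by (intro sum.cong refl) (simp add: sigp_diff algebra_simps)

lemma Dop_Suc: "Dop \<sigma> (Suc s) a y = \<sigma> (Dop \<sigma> s a y) * a"
proof -
  have "Nrm \<sigma> (Suc s) a = \<sigma> (Nrm \<sigma> s a) * a" using Nrm_add[of 1 s a] by (simp add: Nrm_def)
  then show ?thesis unfolding Dop_def by (simp add: sig_mult mult_ac funpow_swap1 del: funpow.simps add: funpow_Suc_right)
qed

lemma Dop_zero: "Dop \<sigma> s a 0 = 0" unfolding Dop_def by (simp add: sigp_zero)

lemma Phi_zero: "Phi a L 0 = 0" unfolding Phi_def by (simp add: Dop_zero)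

lemma Phi_lin:
  assumes rho: "\<forall>k<n. \<rho> k \<in> R"
  shows "Phi a L (\<Sum>k<n. \<rho> k * y k) = (\<Sum>k<n. \<rho> k * Phi a L (y k))"
proof -
  have "Dop \<sigma> s a (\<Sum>k<n. \<rho> k * y k) = (\<Sum>k<n. \<rho> k * Dop \<sigma> s a (y k))" for s
    unfolding Dop_def sigp_sum sigp_mult sum_distrib_right using rho by (intro sum.cong refl) (simp add: sigp_R mult_ac)
  then show ?thesis unfolding Phi_def
    by (simp add: sum_distrib_left mult_ac) (rule sum.swap)
qed

lemma coeff_lin: "coeff (skew_mult \<sigma> [:- \<alpha>, 1:] L) k = - \<alpha> * coeff L k + (if k = 0 then 0 else \<sigma> (coeff L (k - 1)))"
proof (cases k)
  case 0 then show ?thesis by (simp add: coeff_skew)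
next
  case (Suc k')
  have "coeff (skew_mult \<sigma> [:- \<alpha>, 1:] L) k = (\<Sum>i\<le>k. (if i = 0 then - \<alpha> * coeff L k else 0) + (if i = 1 then \<sigma> (coeff L k') else 0))"
    unfolding coeff_skew
  proof (intro sum.cong refl)
    fix i assume "i \<in> {..k}"
    consider "i = 0" | "i = 1" | "i \<ge> 2" by linarith
    then show "coeff [:- \<alpha>, 1:] i * (\<sigma> ^^ i) (coeff L (k - i)) =
       (if i = 0 then - \<alpha> * coeff L k else 0) + (if i = 1 then \<sigma> (coeff L k') else 0)"
    proof cases
      case 3 then have "coeff [:- \<alpha>, 1:] i = 0" by (simp add: coeff_eq_0)
      then show ?thesis using 3 by simp
    qed (use Suc in auto)
  qed
  also have "\<dots> = - \<alpha> * coeff L k + \<sigma> (coeff L k')"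
    unfolding sum.distrib using Suc by (simp only: sum.delta finite_atMost) simp
  finally show ?thesis using Suc by simp
qed

lemma lin_monic:
  assumes "lead_coeff L = 1"
  shows "degree (skew_mult \<sigma> [:- \<alpha>, 1:] L) = Suc (degree L)"
    and "lead_coeff (skew_mult \<sigma> [:- \<alpha>, 1:] L) = 1"
proof -
  have top: "coeff (skew_mult \<sigma> [:- \<alpha>, 1:] L) (Suc (degree L)) = 1"
    unfolding coeff_lin using assms by (simp add: coeff_eq_0 sig_one)
  have "degree (skew_mult \<sigma> [:- \<alpha>, 1:] L) \<le> Suc (degree L)"
    by (rule degree_le) (auto simp: coeff_lin coeff_eq_0 sig_zero)
  moreover have "Suc (degree L) \<le> degree (skew_mult \<sigma> [:- \<alpha>, 1:] L)"
    using top by (intro le_degree) simp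
  ultimately show d: "degree (skew_mult \<sigma> [:- \<alpha>, 1:] L) = Suc (degree L)" by simp
  show "lead_coeff (skew_mult \<sigma> [:- \<alpha>, 1:] L) = 1" unfolding d by (rule top)
qed

lemma Phi_step: "Phi a (skew_mult \<sigma> [:- \<alpha>, 1:] L) y = \<sigma> (Phi a L y) * a - \<alpha> * Phi a L y"
proof -
  define M where "M = Suc (degree L)"
  have d: "degree (skew_mult \<sigma> [:- \<alpha>, 1:] L) < Suc M"
    using skew_deg[of "[:- \<alpha>, 1:]" L] unfolding M_def by (cases "\<alpha> = 0") auto
  have "Phi a (skew_mult \<sigma> [:- \<alpha>, 1:] L) y =
     (\<Sum>k<Suc M. - \<alpha> * (coeff L k * Dop \<sigma> k a y)) + (\<Sum>k<Suc M. (if k = 0 then 0 else \<sigma> (coeff L (k - 1))) * Dop \<sigma> k a y)"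
    unfolding Phi_bound[OF d] coeff_lin sum.distrib[symmetric] by (intro sum.cong refl) (simp add: algebra_simps)
  also have "(\<Sum>k<Suc M. - \<alpha> * (coeff L k * Dop \<sigma> k a y)) = - \<alpha> * Phi a L y"
    unfolding sum_distrib_left[symmetric] by (subst Phi_bound[of L "Suc M"]) (auto simp: M_def)
  also have "(\<Sum>k<Suc M. (if k = 0 then 0 else \<sigma> (coeff L (k - 1))) * Dop \<sigma> k a y) =
       (\<Sum>j<M. \<sigma> (coeff L j) * Dop \<sigma> (Suc j) a y)"
    unfolding sum.lessThan_Suc_shift by simp
  also have "\<dots> = \<sigma> (\<Sum>j<M. coeff L j * Dop \<sigma> j a y) * a"
    unfolding Dop_Suc sig_sum sum_distrib_right by (simp add: sig_mult mult_ac)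
  also have "(\<Sum>j<M. coeff L j * Dop \<sigma> j a y) = Phi a L y"
    by (rule Phi_bound[symmetric]) (simp add: M_def)
  finally show ?thesis by simp
qed

lemma killer: "\<exists>L. lead_coeff L = 1 \<and> degree L = length ps \<and> (\<forall>(a, y)\<in>set ps. Phi a L y = 0)"
proof (induction ps)
  case Nil
  show ?case by (intro exI[of _ 1]) simp
next
  case (Cons p ps)
  obtain a y where p: "p = (a, y)" by fastforce
  obtain L where L: "lead_coeff L = 1" "degree L = length ps" "\<forall>(a, y)\<in>set ps. Phi a L y = 0"
    using Cons.IH by blast
  define z where "z = Phi a L y"
  have "\<exists>\<alpha>. \<sigma> z * a = \<alpha> * z"
  proof (cases "z = 0")
    case True then show ?thesis by (simp add: sig_zero)
  next
    case False
    then obtain k u where ku: "unitS u" "z = pi ^ k * u" using decomp by blast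
    have uu: "u * (sinv u * w) = w" for w using sinv[OF ku(1)] by (simp add: mult.assoc[symmetric])
    have "\<sigma> z * a = (\<sigma> u * a * sinv u) * z"
      unfolding ku(2) using sigp_pow[of 1 pi k] sig_pi
      by (simp add: sig_mult mult_ac uu)
    then show ?thesis by blast
  qed
  then obtain \<alpha> where al: "\<sigma> z * a = \<alpha> * z" by blast
  define L' where "L' = skew_mult \<sigma> [:- \<alpha>, 1:] L"
  have "Phi a L' y = 0" unfolding L'_def Phi_step z_def[symmetric] al by simp
  moreover have "Phi a' L' y' = 0" if "(a', y') \<in> set ps" for a' y'
    unfolding L'_def Phi_step using L(3) that by (auto simp: sig_zero)
  ultimately show ?case using lin_monic[OF L(1), of \<alpha>] L(2) p unfolding L'_def[symmetric]
    by (intro exI[of _ L']) auto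
qed

end




context gx
begin

lemma lin_indep_unit:
  assumes li: "R_lin_indep R N v" and j: "j \<in> {1..N}"
  shows "unitS (v j)"
proof (rule ccontr)
  assume "\<not> unitS (v j)"
  then obtain w where w: "v j = pi * w" using nonunit_pi by blast
  define r where "r = pi ^ (Kn - 1)"
  have rR: "r \<in> R" unfolding r_def using pi_R by auto
  have rnz: "r \<noteq> 0" unfolding r_def by (rule pi_Kn1)
  have rpi: "r * pi = 0" unfolding r_def using pi_Kn Kn_pos
    by (metis Suc_diff_1 power_Suc2)
  define cc where "cc i = (if i = j then r else 0)" for i
  have "(\<Sum>i=1..N. cc i * v i) = r * v j"
    unfolding cc_def using j by (simp add: if_distrib[of "\<lambda>z. z * _"] sum.delta cong: if_cong)
  also have "\<dots> = 0" using w rpi by (simp add: mult.assoc[symmetric])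
  finally have s0: "(\<Sum>i=1..N. cc i * v i) = 0" .
  have ccR: "\<forall>i\<in>{1..N}. cc i \<in> R" unfolding cc_def using rR by auto
  then have "\<forall>i\<in>{1..N}. cc i = 0" using li s0 unfolding R_lin_indep_def by blast
  then have "cc j = 0" using j by blast
  then show False using rnz unfolding cc_def by simp
qed

end

theorem lemma7:
  fixes R :: "'a::{comm_ring_1,finite} set" and h :: "'a poly" and m :: nat and \<theta> :: 'a
    and \<sigma> :: "'a \<Rightarrow> 'a" and l :: nat and nb :: "nat \<Rightarrow> nat" and n k t :: nat
    and a :: "nat \<Rightarrow> 'a" and \<beta> b c e r :: "nat \<Rightarrow> nat \<Rightarrow> 'a" and F G H :: "'a poly"
  assumes setting: "galois_setting R h m \<theta> \<sigma>"
    and n_def: "n = (\<Sum>i=1..l. nb i)"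
    and a_units: "\<forall>i\<in>{1..l}. a i \<in> S_units"
    and cond_i: "\<forall>\<gamma>\<in>S_units. \<forall>i j. 1 \<le> i \<and> i < j \<and> j \<le> l \<longrightarrow> a i - sconj \<sigma> (a j) \<gamma> \<in> S_units"
    and cond_ii: "\<forall>i\<in>{1..l}. R_lin_indep R (nb i) (\<beta> i)"
    and b_def: "\<forall>i\<in>{1..l}. \<forall>j\<in>{1..nb i}. b i j = \<sigma> (\<beta> i j) * a i * sinv (\<beta> i j)"
    and k_ge: "1 \<le> k" and k_le: "k \<le> n - 1"
    and t_def: "t = (n - k) div 2"
    and c_code: "c \<in> LRS_code \<sigma> k l nb a \<beta>"
    and e_wt: "wt_SR R m l nb e \<le> t"
    and r_def: "\<forall>i\<in>{1..l}. \<forall>j\<in>{1..nb i}. r i j = c i j + e i j"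
    and F_deg: "degree F < n"
    and F_int: "\<forall>i\<in>{1..l}. \<forall>j\<in>{1..nb i}. skew_eval \<sigma> F (b i j) = c i j * sinv (\<beta> i j)"
    and G_deg: "degree G < n"
    and G_int: "\<forall>i\<in>{1..l}. \<forall>j\<in>{1..nb i}. skew_eval \<sigma> G (b i j) = e i j * sinv (\<beta> i j)"
    and H_deg: "degree H < n"
    and H_int: "\<forall>i\<in>{1..l}. \<forall>j\<in>{1..nb i}. skew_eval \<sigma> H (b i j) = r i j * sinv (\<beta> i j)"
  shows "(\<exists>L. L \<noteq> 0 \<and> lead_coeff L = 1 \<and> degree L \<le> t \<and>
            (\<forall>i\<in>{1..l}. \<forall>j\<in>{1..nb i}.
               skew_eval \<sigma> (skew_mult \<sigma> L H) (b i j) = skew_eval \<sigma> (skew_mult \<sigma> L F) (b i j)))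
       \<and> (\<exists>L Q. L \<noteq> 0 \<and> lead_coeff L = 1 \<and> degree L \<le> t \<and> degree Q \<le> t + k - 1 \<and>
            ((\<exists>i\<in>{1..l}. \<exists>j\<in>{1..nb i}. c i j \<noteq> 0) \<longrightarrow> Q \<noteq> 0) \<and>
            (\<forall>i\<in>{1..l}. \<forall>j\<in>{1..nb i}.
               skew_eval \<sigma> (skew_mult \<sigma> L H) (b i j) = skew_eval \<sigma> Q (b i j)))"
proof -
  interpret gx R h m \<theta> \<sigma> by unfold_locales (rule setting)
  have bunit: "unitS (\<beta> i j)" if "i \<in> {1..l}" "j \<in> {1..nb i}" for i j
    by (rule lin_indep_unit[of "nb i" "\<beta> i"]) (use cond_ii that in auto)
  have "\<forall>i\<in>{1..l}. \<exists>p. mat_over R (nb i) (nb i) (snd p) \<and>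
      card {j. j < nb i \<and> fst p j \<noteq> 0} \<le> rk R m (nb i) (\<lambda>j. e i (Suc j)) \<and>
      (\<forall>k<nb i. e i (Suc k) = (\<Sum>j<nb i. snd p j k * fst p j))"
  proof
    fix i assume "i \<in> {1..l}"
    obtain B where "R_basis R m B" "snf_rank_is R m (nb i) (\<lambda>i' j. coord R m B (e i (Suc j)) i') (rk R m (nb i) (\<lambda>j. e i (Suc j)))"
      using rk_spec[OF basis, of "nb i" "\<lambda>j. e i (Suc j)"] by blast
    from gens[OF this] obtain g Q' where "mat_over R (nb i) (nb i) Q' \<and>
      card {j. j < nb i \<and> g j \<noteq> 0} \<le> rk R m (nb i) (\<lambda>j. e i (Suc j)) \<and>
      (\<forall>k<nb i. e i (Suc k) = (\<Sum>j<nb i. Q' j k * g j))" by auto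
    then show "\<exists>p. mat_over R (nb i) (nb i) (snd p) \<and>
      card {j. j < nb i \<and> fst p j \<noteq> 0} \<le> rk R m (nb i) (\<lambda>j. e i (Suc j)) \<and>
      (\<forall>k<nb i. e i (Suc k) = (\<Sum>j<nb i. snd p j k * fst p j))"
      by (intro exI[of _ "(g, Q')"]) simp
  qed
  then have "\<exists>f. \<forall>i\<in>{1..l}. mat_over R (nb i) (nb i) (snd (f i)) \<and>
      card {j. j < nb i \<and> fst (f i) j \<noteq> 0} \<le> rk R m (nb i) (\<lambda>j. e i (Suc j)) \<and>
      (\<forall>k<nb i. e i (Suc k) = (\<Sum>j<nb i. snd (f i) j k * fst (f i) j))" by (rule bchoice)
  then obtain f where f: "\<forall>i\<in>{1..l}. mat_over R (nb i) (nb i) (snd (f i)) \<and>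
      card {j. j < nb i \<and> fst (f i) j \<noteq> 0} \<le> rk R m (nb i) (\<lambda>j. e i (Suc j)) \<and>
      (\<forall>k<nb i. e i (Suc k) = (\<Sum>j<nb i. snd (f i) j k * fst (f i) j))"
    by (elim exE) assumption
  define GG where "GG i = fst (f i)" for i
  define QQ where "QQ i = snd (f i)" for i
  have GQ: "mat_over R (nb i) (nb i) (QQ i) \<and>
      card {j. j < nb i \<and> GG i j \<noteq> 0} \<le> rk R m (nb i) (\<lambda>j. e i (Suc j)) \<and>
      (\<forall>k<nb i. e i (Suc k) = (\<Sum>j<nb i. QQ i j k * GG i j))" if "i \<in> {1..l}" for i
    unfolding GG_def QQ_def by (rule f[rule_format, OF that])
  define ps where "ps = concat (map (\<lambda>i. map (\<lambda>j. (a i, GG i j)) (filter (\<lambda>j. GG i j \<noteq> 0) [0..<nb i])) [1..<Suc l])"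
  have lenps: "length ps = (\<Sum>i\<in>{1..l}. card {j. j < nb i \<and> GG i j \<noteq> 0})"
  proof -
    have lf: "length (filter (\<lambda>j. GG i j \<noteq> 0) [0..<nb i]) = card {j. j < nb i \<and> GG i j \<noteq> 0}" for i
      unfolding length_filter_conv_card by (intro arg_cong[where f=card]) auto
    have "length ps = sum_list (map (\<lambda>i. length (filter (\<lambda>j. GG i j \<noteq> 0) [0..<nb i])) [1..<Suc l])"
      unfolding ps_def length_concat map_map o_def length_map ..
    also have "\<dots> = sum_list (map (\<lambda>i. card {j. j < nb i \<and> GG i j \<noteq> 0}) [1..<Suc l])"
      unfolding lf ..
    also have "\<dots> = (\<Sum>i\<in>set [1..<Suc l]. card {j. j < nb i \<and> GG i j \<noteq> 0})"
      by (rule sum_set_upt_conv_sum_list_nat[symmetric])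
    also have "set [1..<Suc l] = {1..l}" by auto
    finally show ?thesis .
  qed
  have "length ps \<le> (\<Sum>i\<in>{1..l}. rk R m (nb i) (\<lambda>j. e i (Suc j)))"
    unfolding lenps by (intro sum_mono) (use GQ in blast)
  then have lent: "length ps \<le> t" using e_wt unfolding wt_SR_def by linarith
  obtain L where L: "lead_coeff L = 1" "degree L = length ps" "\<forall>(a, y)\<in>set ps. Phi a L y = 0"
    using killer by blast
  have Lnz: "L \<noteq> 0" using L(1) by auto
  have Ldeg: "degree L \<le> t" using L(2) lent by simp
  have PhiG: "Phi (a i) L (GG i j) = 0" if "i \<in> {1..l}" "j < nb i" for i j
  proof (cases "GG i j = 0")
    case True then show ?thesis by (simp add: Phi_zero)
  next
    case False
    have m1: "(a i, GG i j) \<in> set (map (\<lambda>j. (a i, GG i j)) (filter (\<lambda>j. GG i j \<noteq> 0) [0..<nb i]))"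
      using False that by auto
    have m2: "i \<in> set [1..<Suc l]" using that by auto
    have "(a i, GG i j) \<in> set ps" unfolding ps_def set_concat set_map using m1 m2 by blast
    then show ?thesis using L(3) by auto
  qed
  have PhiE: "Phi (a i) L (e i j) = 0" if "i \<in> {1..l}" "j \<in> {1..nb i}" for i j
  proof -
    have QR: "\<forall>j'<nb i. QQ i j' (j - 1) \<in> R" using GQ[OF that(1)] that(2) unfolding mat_over_def by auto
    have jj: "j - 1 < nb i" "Suc (j - 1) = j" using that(2) by auto
    have "e i (Suc (j - 1)) = (\<Sum>j'<nb i. QQ i j' (j - 1) * GG i j')"
      using GQ[OF that(1)] jj(1) by blast
    then have "e i j = (\<Sum>j'<nb i. QQ i j' (j - 1) * GG i j')" unfolding jj(2) .
    then have "Phi (a i) L (e i j) = (\<Sum>j'<nb i. QQ i j' (j - 1) * Phi (a i) L (GG i j'))"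
      using Phi_lin[OF QR] by simp
    also have "\<dots> = 0" using PhiG[OF that(1)] by simp
    finally show ?thesis .
  qed
  have key: "skew_eval \<sigma> (skew_mult \<sigma> L H) (b i j) = skew_eval \<sigma> (skew_mult \<sigma> L P) (b i j)"
    if ij: "i \<in> {1..l}" "j \<in> {1..nb i}" and P: "skew_eval \<sigma> P (b i j) = c i j * sinv (\<beta> i j)" for i j P
  proof -
    have u: "unitS (\<beta> i j)" by (rule bunit[OF ij])
    have hb: "skew_eval \<sigma> H (b i j) = r i j * sinv (\<beta> i j)" using H_int ij by blast
    have rr: "r i j = c i j + e i j" using r_def ij by blast
    have "(skew_eval \<sigma> H (b i j) - skew_eval \<sigma> P (b i j)) * \<beta> i j = (r i j - c i j) * (sinv (\<beta> i j) * \<beta> i j)"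
      unfolding hb P by (simp add: algebra_simps)
    also have "\<dots> = e i j" unfolding sinv2[OF u] rr by simp
    finally have "(skew_eval \<sigma> H (b i j) - skew_eval \<sigma> P (b i j)) * \<beta> i j = e i j" .
    then have "skew_eval \<sigma> (skew_mult \<sigma> L H) (b i j) - skew_eval \<sigma> (skew_mult \<sigma> L P) (b i j) = 0"
      using eval_diff[OF u, of "b i j" "a i" L H P] b_def ij PhiE[OF ij] by simp
    then show ?thesis by simp
  qed
  have part1: "\<exists>L. L \<noteq> 0 \<and> lead_coeff L = 1 \<and> degree L \<le> t \<and>
            (\<forall>i\<in>{1..l}. \<forall>j\<in>{1..nb i}.
               skew_eval \<sigma> (skew_mult \<sigma> L H) (b i j) = skew_eval \<sigma> (skew_mult \<sigma> L F) (b i j))"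
    using Lnz L(1) Ldeg key F_int by blast
  obtain u where u: "\<forall>i\<in>{1..l}. \<forall>j\<in>{1..nb i}. c i j = (\<Sum>s<k. u s * Dop \<sigma> s (a i) (\<beta> i j))"
    using c_code unfolding LRS_code_def by blast
  define F' where "F' = (\<Sum>s<k. monom (u s) s)"
  have cF': "coeff F' s = (if s < k then u s else 0)" for s unfolding F'_def by (rule coeff_sum_monom)
  have dF': "degree F' \<le> k - 1" by (rule degree_le) (auto simp: cF')
  have F'k: "degree F' < k" using dF' k_ge by linarith
  have F'ev: "skew_eval \<sigma> F' (b i j) = c i j * sinv (\<beta> i j)" if ij: "i \<in> {1..l}" "j \<in> {1..nb i}" for i j
  proof -
    have uu: "unitS (\<beta> i j)" by (rule bunit[OF ij])
    have "skew_eval \<sigma> F' (b i j) = (\<Sum>s<k. u s * Nrm \<sigma> s (b i j))"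
      unfolding skew_eval_bound[OF F'k] cF' by simp
    also have "\<dots> = (\<Sum>s<k. u s * Dop \<sigma> s (a i) (\<beta> i j)) * sinv (\<beta> i j)"
      unfolding b_def[rule_format, OF ij] Nrm_conj[OF uu] Dop_def sum_distrib_right by (simp add: mult_ac)
    finally show ?thesis using u ij by simp
  qed
  define Q where "Q = skew_mult \<sigma> L F'"
  have Qdeg: "degree Q \<le> t + k - 1" unfolding Q_def using skew_deg[of L F'] Ldeg dF' k_ge by linarith
  have Qnz: "Q \<noteq> 0" if "\<exists>i\<in>{1..l}. \<exists>j\<in>{1..nb i}. c i j \<noteq> 0"
  proof
    assume Q0: "Q = 0"
    have "F' \<noteq> 0"
    proof
      assume "F' = 0"
      then have "\<forall>s<k. u s = 0" using cF' by (metis coeff_0)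
      then show False using that u by auto
    qed
    then have "coeff F' (degree F') \<noteq> 0" by simp
    then have "(\<sigma> ^^ degree L) (coeff F' (degree F')) \<noteq> 0" using sigp_inj[of "degree L" _ 0] sigp_zero by metis
    then have "coeff Q (degree L + degree F') \<noteq> 0" unfolding Q_def coeff_skew_top using L(1) by simp
    then show False using Q0 by simp
  qed
  have part2: "\<exists>L Q. L \<noteq> 0 \<and> lead_coeff L = 1 \<and> degree L \<le> t \<and> degree Q \<le> t + k - 1 \<and>
            ((\<exists>i\<in>{1..l}. \<exists>j\<in>{1..nb i}. c i j \<noteq> 0) \<longrightarrow> Q \<noteq> 0) \<and>
            (\<forall>i\<in>{1..l}. \<forall>j\<in>{1..nb i}.
               skew_eval \<sigma> (skew_mult \<sigma> L H) (b i j) = skew_eval \<sigma> Q (b i j))"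
    using Lnz L(1) Ldeg Qdeg Qnz key F'ev unfolding Q_def by blast
  show ?thesis using part1 part2 by blast
qed


end
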